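(* Let $n,k,m\ge1$, let $D\subseteq\mathbb{R}^n$ and $\Omega\subseteq\mathbb{R}^k$ be open, $O=D\times\Omega$, let $U\subseteq\mathbb{R}^m$ be nonempty and closed. Let $A:\Omega\times U\to\mathbb{R}^{n\times n}$, $b:\Omega\times U\to\mathbb{R}^n$, $c_{i,j}:\Omega\to\mathbb{R}$ ($i\le k$, $j\le n$), $f=(f_1,\dots,f_k)':\Omega\times U\to\mathbb{R}^k$ be locally Lipschitz, and consider the system $$(\Sigma)\qquad \dot x=A(y,u)x+b(y,u),\qquad \dot y_i=f_i(y,u)+\sum_{j=1}^n c_{i,j}(y)x_j,\ i=1,\dots,k,\qquad (x,y)\in O,\ u\in U.$$ Assume that for every $(x_0,y_0)\in O$ and every $u\in L^\infty_{loc}(\mathbb{R}_+;U)$ there is a unique solution of $(\Sigma)$ on $[0,+\infty)$ with values in $O$ and initial value $(x_0,y_0)$. Let $r>0$ and assume: (i) $(\Sigma)$ is strongly observable in time $r$; (ii) for every $\xi\in D$ and every $(y,u)\in C^0([0,r];\Omega)\times L^\infty([0,r];U)$, the solution of $\dot z(t)=A(y(t),u(t))z(t)+b(y(t),u(t))$, $z(0)=\xi$, satisfies $z(t)\in D$ for all $t\in[0,r]$. Let $(x_0,y_0,z_0)\in D\times\Omega\times D$ and $u\in L^\infty_{loc}(\mathbb{R}_+;U)$, let $(x(t),y(t))$ be the solution of $(\Sigma)$ with initial value $(x_0,y_0)$, and let $z(t)\in D$, $t\ge0$, be the solution of the reduced-order hybrid observer described in the context with $z(0)=z_0$. Then $z(t)=x(t)$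 for all $t\ge r$.
   Context: Solutions on $[0,r]$ for $u\in L^\infty([0,r];U)$ are obtained from any extension of $u$. An input $u\in L^\infty([0,r];U)$ strongly distinguishes $(x_0,y_0)\in O$ in time $r$ if for every $(\xi,\eta)\in O$, $(\xi,\eta)\neq(x_0,y_0)$, $\max_{t\in[0,r]}|y(t,x_0,y_0;u)-y(t,\xi,\eta;u)|>0$; $(\Sigma)$ is strongly observable in time $r$ if every $u\in L^\infty([0,r];U)$ strongly distinguishes every state of $O$. Operator $P$: for $y\in C^0([0,r];\Omega)$, $u\in L^\infty([0,r];U)$, let $\Phi(t)$ solve $\dot\Phi=A(y(t),u(t))\Phi$, $\Phi(0)=I$; $\theta(\tau)=\int_0^\tau\Phi(\tau)\Phi^{-1}(s)b(y(s),u(s))ds$; $C'(\tau)=\{c_{i,j}(y(\tau))\}\in\mathbb{R}^{k\times n}$; $q(\tau)=\int_0^\tau\Phi'(s)C(s)ds$; $p(\tau)=y(\tau)-y(0)-\int_0^\tau f(y(s),u(s))ds-\int_0^\tau C'(s)\theta(s)ds$; $Q=\int_0^r q q'd\tau$; when $Q$ is invertible, $P(y,u)=\Phi(r)Q^{-1}\int_0^r q(\tau)p(\tau)d\tau+\theta(r)$. Shift: $(\delta_s y)(\sigma)=y(s+\sigma)$, $(\delta_s u)(\sigma)=u(s+\sigma)$, $\sigma\in[0,r]$. Reduced-order observer: with $\tau_i=ir$, on $[\tau_i,\tau_{i+1})$, $\dot z(t)=A(y(t),u(t))z(t)+b(y(t),u(t))$, and $z(\tau_{i+1})=P(\delta_{\tau_i}y,\delta_{\tau_i}u)$;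 prime denotes transpose. *)

theory Defs
  imports "HOL-Analysis.Analysis"
begin

text \<open>A y v :: real^'n^'n, b y v :: real^'n, C y :: real^'n^'k with (C y)$i$j = c_{i,j}(y),
  f y v :: real^'k.  Inputs are represented by (Lebesgue measurable) representatives
  taking values in U everywhere and bounded on bounded intervals.\<close>

definition loc_lipschitz :: "'a::metric_space set \<Rightarrow> ('a \<Rightarrow> 'b::metric_space) \<Rightarrow> bool" where
  "loc_lipschitz S g \<longleftrightarrow> (\<forall>p\<in>S. \<exists>e>0. \<exists>L. L-lipschitz_on (cball p e \<inter> S) g)"

definition Linf_loc :: "('m::euclidean_space) set \<Rightarrow> (real \<Rightarrow> 'm) \<Rightarrow> bool" where
  "Linf_loc U u \<longleftrightarrow> set_borel_measurable lebesgue {0..} u \<and> (\<forall>t\<ge>0. u t \<in> U)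
      \<and> (\<forall>T. bounded (u ` {0..T}))"

definition Linf :: "real \<Rightarrow> ('m::euclidean_space) set \<Rightarrow> (real \<Rightarrow> 'm) \<Rightarrow> bool" where
  "Linf r U u \<longleftrightarrow> set_borel_measurable lebesgue {0..r} u \<and> (\<forall>t\<in>{0..r}. u t \<in> U)
      \<and> bounded (u ` {0..r})"

definition sys_field ::
  "(real^'k \<Rightarrow> real^'m \<Rightarrow> real^'n^'n) \<Rightarrow> (real^'k \<Rightarrow> real^'m \<Rightarrow> real^'n)
   \<Rightarrow> (real^'k \<Rightarrow> real^'n^'k) \<Rightarrow> (real^'k \<Rightarrow> real^'m \<Rightarrow> real^'k)
   \<Rightarrow> (real^'n) \<times> (real^'k) \<Rightarrow> real^'m \<Rightarrow> (real^'n) \<times> (real^'k)" where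
  "sys_field A b C f w v = (A (snd w) v *v fst w + b (snd w) v, f (snd w) v + C (snd w) *v fst w)"

definition sys_sol ::
  "(real^'k \<Rightarrow> real^'m \<Rightarrow> real^'n^'n) \<Rightarrow> (real^'k \<Rightarrow> real^'m \<Rightarrow> real^'n)
   \<Rightarrow> (real^'k \<Rightarrow> real^'n^'k) \<Rightarrow> (real^'k \<Rightarrow> real^'m \<Rightarrow> real^'k)
   \<Rightarrow> ((real^'n) \<times> (real^'k)) set \<Rightarrow> (real^'n) \<times> (real^'k) \<Rightarrow> (real \<Rightarrow> real^'m)
   \<Rightarrow> (real \<Rightarrow> (real^'n) \<times> (real^'k)) \<Rightarrow> bool" where
  "sys_sol A b C f Ob p u w \<longleftrightarrow> w 0 = p \<and> continuous_on {0..} w \<and> (\<forall>t\<ge>0. w t \<in> Ob)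
     \<and> (\<forall>t\<ge>0. ((\<lambda>s. sys_field A b C f (w s) (u s)) has_integral (w t - p)) {0..t})"

text \<open>u strongly distinguishes p in time r (u in L^infinity([0,r];U); the solutions on [0,r]
  are those obtained from any extension of u in L^infinity_loc).\<close>
definition strongly_distinguishes where
  "strongly_distinguishes A b C f Ob U r u p \<longleftrightarrow>
     (\<forall>q\<in>Ob. q \<noteq> p \<longrightarrow>
       (\<forall>ub w1 w2. Linf_loc U ub \<and> (\<forall>t\<in>{0..r}. ub t = u t)
          \<and> sys_sol A b C f Ob p ub w1 \<and> sys_sol A b C f Ob q ub w2
          \<longrightarrow> (\<exists>t\<in>{0..r}. snd (w1 t) \<noteq> snd (w2 t))))"

definition strongly_observable where
  "strongly_observable A b C f Ob U r \<longleftrightarrow>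
     (\<forall>u. Linf r U u \<longrightarrow> (\<forall>p\<in>Ob. strongly_distinguishes A b C f Ob U r u p))"

definition lin_sol ::
  "(real^'k \<Rightarrow> real^'m \<Rightarrow> real^'n^'n) \<Rightarrow> (real^'k \<Rightarrow> real^'m \<Rightarrow> real^'n)
   \<Rightarrow> (real \<Rightarrow> real^'k) \<Rightarrow> (real \<Rightarrow> real^'m) \<Rightarrow> real \<Rightarrow> real \<Rightarrow> real^'n
   \<Rightarrow> (real \<Rightarrow> real^'n) \<Rightarrow> bool" where
  "lin_sol A b y u a T xi z \<longleftrightarrow> z a = xi \<and> continuous_on {a..T} z \<and>
     (\<forall>t\<in>{a..T}. ((\<lambda>s. A (y s) (u s) *v z s + b (y s) (u s)) has_integral (z t - xi)) {a..t})"

definition obs_Phi ::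
  "(real^'k \<Rightarrow> real^'m \<Rightarrow> real^'n^'n) \<Rightarrow> real \<Rightarrow> (real \<Rightarrow> real^'k) \<Rightarrow> (real \<Rightarrow> real^'m)
   \<Rightarrow> real \<Rightarrow> real^'n^'n" where
  "obs_Phi A r y u = (SOME \<Phi>. \<Phi> 0 = mat 1 \<and> continuous_on {0..r} \<Phi> \<and>
      (\<forall>t\<in>{0..r}. ((\<lambda>s. A (y s) (u s) ** \<Phi> s) has_integral (\<Phi> t - mat 1)) {0..t}))"

definition obs_theta where
  "obs_theta A b r y u \<tau> =
     integral {0..\<tau>} (\<lambda>s. (obs_Phi A r y u \<tau> ** matrix_inv (obs_Phi A r y u s)) *v b (y s) (u s))"

definition obs_q ::
  "(real^'k \<Rightarrow> real^'m \<Rightarrow> real^'n^'n) \<Rightarrow> (real^'k \<Rightarrow> real^'n^'k) \<Rightarrow> real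
   \<Rightarrow> (real \<Rightarrow> real^'k) \<Rightarrow> (real \<Rightarrow> real^'m) \<Rightarrow> real \<Rightarrow> real^'k^'n" where
  "obs_q A C r y u \<tau> = integral {0..\<tau>} (\<lambda>s. transpose (obs_Phi A r y u s) ** transpose (C (y s)))"

definition obs_p where
  "obs_p A b C f r y u \<tau> = y \<tau> - y 0 - integral {0..\<tau>} (\<lambda>s. f (y s) (u s))
      - integral {0..\<tau>} (\<lambda>s. C (y s) *v obs_theta A b r y u s)"

definition obs_Q where
  "obs_Q A C r y u = integral {0..r} (\<lambda>\<tau>. obs_q A C r y u \<tau> ** transpose (obs_q A C r y u \<tau>))"

definition obs_P where
  "obs_P A b C f r y u = obs_Phi A r y u r *v (matrix_inv (obs_Q A C r y u)
      *v integral {0..r} (\<lambda>\<tau>. obs_q A C r y u \<tau> *v obs_p A b C f r y u \<tau>))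
      + obs_theta A b r y u r"

definition observer_sol where
  "observer_sol A b C f r y u z0 z \<longleftrightarrow> z 0 = z0 \<and>
     (\<forall>i::nat.
        (\<forall>t. real i * r \<le> t \<and> t < real (Suc i) * r \<longrightarrow>
           ((\<lambda>s. A (y s) (u s) *v z s + b (y s) (u s)) has_integral (z t - z (real i * r)))
             {real i * r..t})
      \<and> z (real (Suc i) * r) =
          obs_P A b C f r (\<lambda>\<sigma>. y (real i * r + \<sigma>)) (\<lambda>\<sigma>. u (real i * r + \<sigma>)))"

end

theory Submission
  imports Defs
begin

lemma has_integral_sub_interval:
  fixes f :: "real \<Rightarrow> 'a::banach"
  assumes "(f has_integral I1) {a..d}" "(f has_integral I2) {a..c}" "a \<le> c" "c \<le> d"
  shows "(f has_integral (I1 - I2)) {c..d}"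
proof -
  have "f integrable_on {c..d}"
    using integrable_subinterval_real[of f a d c d] assms by (auto simp: has_integral_integrable)
  then obtain J where J: "(f has_integral J) {c..d}" by blast
  have "(f has_integral (I2 + J)) {a..d}"
    using has_integral_combine[OF assms(3,4) assms(2) J] .
  then have "I1 = I2 + J" using assms(1) has_integral_unique by blast
  then show ?thesis using J by simp
qed

lemma has_integral_shift:
  fixes f :: "real \<Rightarrow> 'a::banach"
  shows "((\<lambda>s. f (c + s)) has_integral I) {a..b} \<longleftrightarrow> (f has_integral I) {c+a..c+b}"
  using has_integral_affinity_iff[of 1 f c I "c+a" "c+b"]
  by (simp add: add.commute cbox_interval)

lemma additive_quadratic_zero:
  fixes H :: "real \<Rightarrow> real \<Rightarrow> 'a::real_normed_vector"
  assumes add: "\<And>c d e. a \<le> c \<Longrightarrow> c \<le> d \<Longrightarrow> d \<le> e \<Longrightarrow> e \<le> b \<Longrightarrow> H c e = H c d + H d e"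
    and bnd: "\<And>c d. a \<le> c \<Longrightarrow> c \<le> d \<Longrightarrow> d \<le> b \<Longrightarrow> norm (H c d) \<le> C * (d - c)^2"
    and ab: "a \<le> b"
  shows "H a b = 0"
proof -
  have C0: "C \<ge> 0 \<or> a = b"
  proof (cases "a = b")
    case False
    then have "norm (H a b) \<le> C * (b - a)^2" using bnd ab by auto
    moreover have "(b - a)^2 > 0" using False ab by auto
    ultimately show ?thesis by (smt (verit) norm_ge_zero zero_le_mult_iff)
  qed simp
  have main: "norm (H a b) \<le> C * (b - a)^2 / real N" if N: "N > 0" for N :: nat
  proof -
    define h where "h = (b - a) / real N"
    have h0: "h \<ge> 0" using ab N by (simp add: h_def)
    have step: "m \<le> N \<Longrightarrow> H a (a + real m * h) = (\<Sum>i<m. H (a + real i * h) (a + real (Suc i) * h))" for m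
    proof (induction m)
      case 0
      have "H a a = H a a + H a a" using add[of a a a] ab by simp
      then show ?case by simp
    next
      case (Suc m)
      have le: "a + real m * h \<le> b" "a + real (Suc m) * h \<le> b"
      proof -
        have "real (Suc m) * h \<le> real N * h" using Suc.prems h0 by (intro mult_right_mono) auto
        also have "\<dots> = b - a" using N by (simp add: h_def)
        finally have 1: "a + real (Suc m) * h \<le> b" by simp
        have "real m * h \<le> real (Suc m) * h" using h0 by (intro mult_right_mono) auto
        with 1 show "a + real m * h \<le> b" by simp
        show "a + real (Suc m) * h \<le> b" by (fact 1)
      qed
      have "H a (a + real (Suc m) * h) = H a (a + real m * h) + H (a + real m * h) (a + real (Suc m) * h)"
        using le h0 by (intro add) (auto simp: distrib_right)
      then show ?case using Suc by simp
    qed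
    have "a + real N * h = b" using N by (simp add: h_def)
    then have "H a b = (\<Sum>i<N. H (a + real i * h) (a + real (Suc i) * h))"
      using step[of N] by simp
    then have "norm (H a b) \<le> (\<Sum>i<N. norm (H (a + real i * h) (a + real (Suc i) * h)))"
      by (simp add: norm_sum)
    also have "\<dots> \<le> (\<Sum>i<N. C * h^2)"
    proof (rule sum_mono)
      fix i assume i: "i \<in> {..<N}"
      have "real (Suc i) * h \<le> real N * h" using i h0 by (intro mult_right_mono) auto
      also have "\<dots> = b - a" using N by (simp add: h_def)
      finally have "a + real (Suc i) * h \<le> b" by simp
      moreover have "a \<le> a + real i * h" using h0 by simp
      moreover have "a + real i * h \<le> a + real (Suc i) * h" using h0 by (simp add: distrib_right)
      ultimately have "norm (H (a + real i * h) (a + real (Suc i) * h)) \<le> C * ((a + real (Suc i) * h) - (a + real i * h))^2"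
        by (intro bnd) auto
      also have "((a + real (Suc i) * h) - (a + real i * h)) = h" by (simp add: distrib_right)
      finally show "norm (H (a + real i * h) (a + real (Suc i) * h)) \<le> C * h^2" .
    qed
    also have "\<dots> = C * (b - a)^2 / real N"
      using N by (simp add: h_def power2_eq_square field_simps)
    finally show ?thesis .
  qed
  show ?thesis
  proof (cases "a = b")
    case True
    have "H a a = H a a + H a a" using add[of a a a] ab by simp
    then show ?thesis using True by simp
  next
    case False
    with C0 have C0: "C \<ge> 0" by simp
    have "norm (H a b) \<le> 0"
    proof (rule field_le_epsilon)
      fix e :: real assume e: "e > 0"
      obtain N :: nat where N: "N > C * (b - a)^2 / e" using reals_Archimedean2 by blast
      have "0 \<le> C * (b - a)^2 / e" using C0 e by simp
      then have "real N > 0" using N by linarith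
      then have Npos: "N > 0" by simp
      have "C * (b - a)^2 / real N \<le> e"
        using N Npos e by (simp add: field_simps)
      then show "norm (H a b) \<le> 0 + e" using main[OF Npos] by simp
    qed
    then show ?thesis by simp
  qed
qed

lemma has_integral_norm_le_len:
  fixes f :: "real \<Rightarrow> 'a::real_normed_vector"
  assumes "(f has_integral i) {c..d}" "c \<le> d" "\<And>s. s \<in> {c..d} \<Longrightarrow> norm (f s) \<le> B"
  shows "norm i \<le> B * (d - c)"
proof -
  have B0: "B \<ge> 0" using assms(2) assms(3)[of c] by (meson atLeastAtMost_iff norm_ge_zero order.trans order_refl)
  have "norm i \<le> B * Henstock_Kurzweil_Integration.content {c..d}"
    by (rule has_integral_bound_real[OF B0 finite.emptyI assms(1)]) (use assms(3) in auto)
  then show ?thesis using assms(2) by simp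
qed

lemma product_rule_integral:
  fixes prod :: "'a::banach \<Rightarrow> 'b::banach \<Rightarrow> 'c::banach"
    and f F :: "real \<Rightarrow> 'a" and g G :: "real \<Rightarrow> 'b"
  assumes bb: "bounded_bilinear prod"
    and ab: "a \<le> b"
    and F: "\<And>t. t \<in> {a..b} \<Longrightarrow> (f has_integral (F t - F a)) {a..t}"
    and G: "\<And>t. t \<in> {a..b} \<Longrightarrow> (g has_integral (G t - G a)) {a..t}"
    and fK: "\<And>s. s \<in> {a..b} \<Longrightarrow> norm (f s) \<le> K"
    and gK: "\<And>s. s \<in> {a..b} \<Longrightarrow> norm (g s) \<le> K"
    and i1: "(\<lambda>s. prod (f s) (G s)) integrable_on {a..b}"
    and i2: "(\<lambda>s. prod (F s) (g s)) integrable_on {a..b}"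
  shows "((\<lambda>s. prod (f s) (G s) + prod (F s) (g s)) has_integral
            (prod (F b) (G b) - prod (F a) (G a))) {a..b}"
proof -
  interpret bounded_bilinear prod by (fact bb)
  define h where "h = (\<lambda>s. prod (f s) (G s) + prod (F s) (g s))"
  have hi: "h integrable_on {a..b}" unfolding h_def using i1 i2 by (rule integrable_add)
  have hsub: "h integrable_on {c..d}" if "a \<le> c" "d \<le> b" for c d
    using integrable_subinterval_real[of h a b c d] hi that by auto
  define H where "H c d = prod (F d) (G d) - prod (F c) (G c) - integral {c..d} h" for c d
  obtain Kp where Kp: "Kp > 0" "\<And>x y. norm (prod x y) \<le> norm x * norm y * Kp"
    using pos_bounded by blast
  have K0: "K \<ge> 0" using fK[of a] ab by (meson atLeastAtMost_iff norm_ge_zero order.trans order_refl)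
  have Fi: "(f has_integral (F d - F c)) {c..d}" if "a \<le> c" "c \<le> d" "d \<le> b" for c d
    using has_integral_sub_interval[of f "F d - F a" a d "F c - F a" c] F[of d] F[of c] that by auto
  have Gi: "(g has_integral (G d - G c)) {c..d}" if "a \<le> c" "c \<le> d" "d \<le> b" for c d
    using has_integral_sub_interval[of g "G d - G a" a d "G c - G a" c] G[of d] G[of c] that by auto
  have Hadd: "H c e = H c d + H d e" if "a \<le> c" "c \<le> d" "d \<le> e" "e \<le> b" for c d e
  proof -
    have "integral {c..d} h + integral {d..e} h = integral {c..e} h"
      using Henstock_Kurzweil_Integration.integral_combine[OF that(2,3) hsub[of c e]] that by auto
    then show ?thesis unfolding H_def by (simp add: algebra_simps)
  qed
  have Hbnd: "norm (H c d) \<le> (2 * Kp * K * K) * (d - c)^2" if cd: "a \<le> c" "c \<le> d" "d \<le> b" for c d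
  proof -
    have e1: "((\<lambda>s. prod (f s) (G d)) has_integral prod (F d - F c) (G d)) {c..d}"
      using has_integral_linear[OF Fi[OF cd] bounded_linear_left[of "G d"]] by (simp add: o_def)
    have e2: "((\<lambda>s. prod (F c) (g s)) has_integral prod (F c) (G d - G c)) {c..d}"
      using has_integral_linear[OF Gi[OF cd] bounded_linear_right[of "F c"]] by (simp add: o_def)
    have e3: "(h has_integral integral {c..d} h) {c..d}"
      using hsub[of c d] cd by (simp add: integrable_integral)
    have eq: "prod (F d) (G d) - prod (F c) (G c) = prod (F d - F c) (G d) + prod (F c) (G d - G c)"
      by (simp add: diff_left diff_right)
    have e4: "((\<lambda>s. prod (f s) (G d) + prod (F c) (g s) - h s) has_integral H c d) {c..d}"
      unfolding H_def eq by (intro has_integral_diff has_integral_add e1 e2 e3)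
    show ?thesis
    proof (rule order.trans[OF has_integral_norm_le_len[OF e4 cd(2)]])
      fix s assume s: "s \<in> {c..d}"
      have "prod (f s) (G d) + prod (F c) (g s) - h s = prod (f s) (G d - G s) + prod (F c - F s) (g s)"
        unfolding h_def by (simp add: diff_left diff_right)
      moreover have "norm (G d - G s) \<le> K * (d - c)"
      proof -
        have "norm (G d - G s) \<le> K * (d - s)"
          using has_integral_norm_le_len[OF Gi[of s d]] s cd gK by auto
        also have "\<dots> \<le> K * (d - c)" using s K0 by (intro mult_left_mono) auto
        finally show ?thesis .
      qed
      moreover have "norm (F c - F s) \<le> K * (d - c)"
      proof -
        have "norm (F s - F c) \<le> K * (s - c)"
          using has_integral_norm_le_len[OF Fi[of c s]] s cd fK by auto
        also have "\<dots> \<le> K * (d - c)" using s K0 by (intro mult_left_mono) auto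
        finally show ?thesis by (simp add: norm_minus_commute)
      qed
      moreover have "norm (f s) \<le> K" "norm (g s) \<le> K" using s cd fK gK by auto
      ultimately have "norm (prod (f s) (G d) + prod (F c) (g s) - h s) \<le> K * (K * (d - c)) * Kp + (K * (d - c)) * K * Kp"
      proof -
        assume eqs: "prod (f s) (G d) + prod (F c) (g s) - h s = prod (f s) (G d - G s) + prod (F c - F s) (g s)"
          and n1: "norm (G d - G s) \<le> K * (d - c)" and n2: "norm (F c - F s) \<le> K * (d - c)"
          and n3: "norm (f s) \<le> K" and n4: "norm (g s) \<le> K"
        have "norm (prod (f s) (G d - G s)) \<le> norm (f s) * norm (G d - G s) * Kp" by (rule Kp(2))
        also have "\<dots> \<le> K * (K * (d - c)) * Kp"
          using mult_mono[OF n3 n1 K0 norm_ge_zero] Kp(1) by (intro mult_right_mono) auto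
        finally have a1: "norm (prod (f s) (G d - G s)) \<le> K * (K * (d - c)) * Kp" .
        have "norm (prod (F c - F s) (g s)) \<le> norm (F c - F s) * norm (g s) * Kp" by (rule Kp(2))
        also have "\<dots> \<le> (K * (d - c)) * K * Kp"
          using mult_mono[OF n2 n4 _ norm_ge_zero] K0 cd Kp(1) by (intro mult_right_mono) auto
        finally have a2: "norm (prod (F c - F s) (g s)) \<le> (K * (d - c)) * K * Kp" .
        show ?thesis unfolding eqs
          by (rule order.trans[OF norm_triangle_ineq add_mono[OF a1 a2]])
      qed
      then show "norm (prod (f s) (G d) + prod (F c) (g s) - h s) \<le> 2 * Kp * K * K * (d - c)"
        by (simp add: algebra_simps)
    qed (simp add: power2_eq_square algebra_simps)
  qed
  have "H a b = 0" by (rule additive_quadratic_zero[OF Hadd Hbnd ab]) auto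
  then have "integral {a..b} h = prod (F b) (G b) - prod (F a) (G a)" unfolding H_def by simp
  then show ?thesis using hi unfolding h_def[symmetric] by (metis integrable_integral)
qed

lemma pow_fact_tendsto0: "(\<lambda>j. (x::real)^j / fact j) \<longlonglongrightarrow> 0"
proof -
  have "summable (\<lambda>n. x ^ n /\<^sub>R fact n)" using exp_converges sums_summable by blast
  then have "(\<lambda>n. x ^ n /\<^sub>R fact n) \<longlonglongrightarrow> 0" by (rule summable_LIMSEQ_zero)
  then show ?thesis by (simp add: divide_inverse mult.commute)
qed

lemma has_integral_pow_shift:
  fixes a t :: real
  assumes "a \<le> t"
  shows "((\<lambda>s. (s - a)^j) has_integral (t - a)^(Suc j) / real (Suc j)) {a..t}"
proof -
  have "((\<lambda>s. (s - a)^j) has_integral ((\<lambda>s. (s - a)^(Suc j) / real (Suc j)) t - (\<lambda>s. (s - a)^(Suc j) / real (Suc j)) a)) {a..t}"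
  proof (rule fundamental_theorem_of_calculus[OF assms])
    fix x assume "x \<in> {a..t}"
    show "((\<lambda>s. (s - a)^(Suc j) / real (Suc j)) has_vector_derivative (x - a)^j) (at x within {a..t})"
      unfolding has_real_derivative_iff_has_vector_derivative[symmetric]
      by (rule derivative_eq_intros refl | simp)+
  qed
  then show ?thesis by simp
qed

lemma pow_fact_integral:
  fixes a t L m :: real
  assumes "a \<le> t"
  shows "((\<lambda>s. L * (m * (L * (s - a))^j / fact j)) has_integral m * (L * (t - a))^(Suc j) / fact (Suc j)) {a..t}"
proof -
  have "((\<lambda>s. (L^(Suc j) * m / fact j) * (s - a)^j) has_integral (L^(Suc j) * m / fact j) * ((t - a)^(Suc j) / real (Suc j))) {a..t}"
    by (rule has_integral_mult_right[OF has_integral_pow_shift[OF assms]])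
  moreover have "(\<lambda>s. (L^(Suc j) * m / fact j) * (s - a)^j) = (\<lambda>s. L * (m * (L * (s - a))^j / fact j))"
    by (auto simp: power_mult_distrib)
  moreover have "(L^(Suc j) * m / fact j) * ((t - a)^(Suc j) / real (Suc j)) = m * (L * (t - a))^(Suc j) / fact (Suc j)"
  proof -
    have 1: "(L * (t - a))^(Suc j) = L^(Suc j) * (t - a)^(Suc j)" by (rule power_mult_distrib)
    have 2: "(fact (Suc j) :: real) = real (Suc j) * fact j" by simp
    show ?thesis unfolding 1 2 by (simp only: divide_inverse inverse_mult_distrib mult_ac)
  qed
  ultimately show ?thesis by simp
qed

lemma gronwall_zero:
  fixes e g :: "real \<Rightarrow> 'a::banach"
  assumes ab: "a \<le> b" and cont: "continuous_on {a..b} e"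
    and int: "\<And>t. t \<in> {a..b} \<Longrightarrow> (g has_integral e t) {a..t}"
    and bnd: "\<And>s. s \<in> {a..b} \<Longrightarrow> norm (g s) \<le> L * norm (e s)"
    and L0: "L \<ge> 0"
    and t: "t \<in> {a..b}"
  shows "e t = 0"
proof -
  have "compact (e ` {a..b})" by (rule compact_continuous_image[OF cont compact_Icc])
  then obtain m where m: "\<And>t. t \<in> {a..b} \<Longrightarrow> norm (e t) \<le> m"
    using compact_imp_bounded bounded_iff by (metis imageI)
  have ind: "\<forall>t\<in>{a..b}. norm (e t) \<le> m * (L * (t - a))^j / fact j" for j
  proof (induction j)
    case 0 then show ?case using m by simp
  next
    case (Suc j)
    show ?case
    proof
      fix t assume t: "t \<in> {a..b}"
      have "norm (e t) = norm (integral {a..t} g)" using int[OF t] by (simp add: integral_unique)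
      also have "norm (integral {a..t} g) \<le> integral {a..t} (\<lambda>s. L * (m * (L * (s - a))^j / fact j))"
      proof (rule Henstock_Kurzweil_Integration.integral_norm_bound_integral)
        show "g integrable_on {a..t}" using int[OF t] by blast
        show "(\<lambda>s. L * (m * (L * (s - a)) ^ j / fact j)) integrable_on {a..t}"
          using pow_fact_integral[of a t L m j] t by auto
        fix s assume s: "s \<in> {a..t}"
        then have sab: "s \<in> {a..b}" using t by auto
        have "norm (g s) \<le> L * norm (e s)" by (rule bnd[OF sab])
        also have "\<dots> \<le> L * (m * (L * (s - a))^j / fact j)"
          using Suc.IH sab L0 by (intro mult_left_mono) auto
        finally show "norm (g s) \<le> L * (m * (L * (s - a))^j / fact j)" .
      qed
      also have "\<dots> = m * (L * (t - a))^(Suc j) / fact (Suc j)"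
        using t by (intro integral_unique pow_fact_integral) auto
      finally show "norm (e t) \<le> m * (L * (t - a))^(Suc j) / fact (Suc j)" .
    qed
  qed
  have lim: "(\<lambda>j. m * ((L * (t - a))^j / fact j)) \<longlonglongrightarrow> m * 0"
    by (intro tendsto_mult_left pow_fact_tendsto0)
  have "norm (e t) \<le> m * 0"
  proof (rule LIMSEQ_le_const[OF lim])
    show "\<exists>N. \<forall>n\<ge>N. norm (e t) \<le> m * ((L * (t - a)) ^ n / fact n)"
      using ind t by (metis times_divide_eq_right)
  qed
  then show ?thesis by simp
qed


lemma bilinear_mm: "bilinear (\<lambda>(A::real^'n^'m) (B::real^'p^'n). A ** B)"
  unfolding bilinear_def linear_iff
  by (auto simp: matrix_matrix_mult_def vec_eq_iff sum.distrib algebra_simps sum_distrib_left)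

lemma bilinear_mv: "bilinear (\<lambda>(A::real^'n^'k) (x::real^'n). A *v x)"
  unfolding bilinear_def linear_iff
  by (auto simp: matrix_vector_right_distrib matrix_vector_mult_add_rdistrib matrix_vector_mult_scaleR scaleR_matrix_vector_assoc)

lemma bb_mm: "bounded_bilinear (\<lambda>(A::real^'n^'m) (B::real^'p^'n). A ** B)"
  using bilinear_mm bilinear_conv_bounded_bilinear by blast
lemma bb_mv: "bounded_bilinear (\<lambda>(A::real^'n^'k) (x::real^'n). A *v x)"
  using bilinear_mv bilinear_conv_bounded_bilinear by blast

lemma bm_integrable:
  fixes f :: "real \<Rightarrow> 'a::euclidean_space"
  assumes "f \<in> borel_measurable (lebesgue_on {a..b})" "\<And>s. s \<in> {a..b} \<Longrightarrow> norm (f s) \<le> B"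
  shows "f integrable_on {a..b}"
  by (rule measurable_bounded_by_integrable_imp_integrable[OF assms(1) integrable_const_ivl assms(2)]) auto

lemma bm_mono:
  "f \<in> borel_measurable (lebesgue_on S) \<Longrightarrow> T \<subseteq> S \<Longrightarrow> f \<in> borel_measurable (lebesgue_on T)"
  by (rule measurable_restrict_mono)

lemma bm_cont:
  fixes f :: "real \<Rightarrow> 'a::euclidean_space"
  shows "continuous_on {a..b} f \<Longrightarrow> f \<in> borel_measurable (lebesgue_on {a..b})"
  by (rule continuous_imp_measurable_on_sets_lebesgue) auto

lemma bm_bilinear:
  fixes h :: "'a::euclidean_space \<Rightarrow> 'b::euclidean_space \<Rightarrow> 'c::euclidean_space"
  assumes "bilinear h" "f \<in> borel_measurable (lebesgue_on {a..b::real})" "g \<in> borel_measurable (lebesgue_on {a..b})"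
  shows "(\<lambda>x. h (f x) (g x)) \<in> borel_measurable (lebesgue_on {a..b})"
  by (rule borel_measurable_bilinear[OF assms]) auto

lemma cont_bounded:
  fixes f :: "real \<Rightarrow> 'a::real_normed_vector"
  assumes "continuous_on {a..b} f"
  obtains B where "\<And>s. s \<in> {a..b} \<Longrightarrow> norm (f s) \<le> B"
proof -
  have "compact (f ` {a..b})" by (rule compact_continuous_image[OF assms compact_Icc])
  then show ?thesis using that compact_imp_bounded bounded_iff by (metis imageI)
qed


lemma picard_exists:
  fixes prod :: "'m::euclidean_space \<Rightarrow> 'a::euclidean_space \<Rightarrow> 'a"
    and M :: "real \<Rightarrow> 'm" and X0 :: 'a
  assumes bb: "bounded_bilinear prod"
    and Mm: "M \<in> borel_measurable (lebesgue_on {0..r})"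
    and MK: "\<And>s. s \<in> {0..r} \<Longrightarrow> norm (M s) \<le> K"
    and r: "0 \<le> r"
  shows "\<exists>X. X 0 = X0 \<and> continuous_on {0..r} X \<and>
           (\<forall>t\<in>{0..r}. ((\<lambda>s. prod (M s) (X s)) has_integral (X t - X0)) {0..t})"
proof -
  interpret bounded_bilinear prod by (fact bb)
  have bil: "bilinear prod" using bb bilinear_conv_bounded_bilinear by blast
  obtain Kp where Kp: "Kp > 0" "\<And>x y. norm (prod x y) \<le> norm x * norm y * Kp"
    using pos_bounded by blast
  have K0: "K \<ge> 0" using MK[of 0] r by (meson atLeastAtMost_iff norm_ge_zero order.trans order_refl)
  define L where "L = K * Kp"
  have L0: "L \<ge> 0" using K0 Kp by (simp add: L_def)
  have pbnd: "norm (prod (M s) y) \<le> L * norm y" if "s \<in> {0..r}" for s y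
  proof -
    have "norm (prod (M s) y) \<le> norm (M s) * norm y * Kp" by (rule Kp(2))
    also have "\<dots> \<le> K * norm y * Kp" using MK[OF that] Kp(1) by (intro mult_right_mono) auto
    finally show ?thesis by (simp add: L_def mult_ac)
  qed
  have integ: "(\<lambda>s. prod (M s) (Y s)) integrable_on {0..t}"
    if Y: "continuous_on {0..r} Y" and t: "t \<in> {0..r}" for Y t
  proof -
    obtain B where B: "\<And>s. s \<in> {0..r} \<Longrightarrow> norm (Y s) \<le> B" using cont_bounded[OF Y] by blast
    have "(\<lambda>s. prod (M s) (Y s)) \<in> borel_measurable (lebesgue_on {0..r})"
      by (rule bm_bilinear[OF bil Mm bm_cont[OF Y]])
    then have "(\<lambda>s. prod (M s) (Y s)) integrable_on {0..r}"
    proof (rule bm_integrable)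
      fix s assume s: "s \<in> {0..r}"
      have "norm (prod (M s) (Y s)) \<le> L * norm (Y s)" by (rule pbnd[OF s])
      also have "\<dots> \<le> L * B" using B[OF s] L0 by (intro mult_left_mono) auto
      finally show "norm (prod (M s) (Y s)) \<le> L * B" .
    qed
    then show ?thesis using integrable_subinterval_real t by fastforce
  qed
  define P where "P = rec_nat (\<lambda>t. X0) (\<lambda>j Pj t. X0 + integral {0..t} (\<lambda>s. prod (M s) (Pj s)))"
  have P0: "P 0 = (\<lambda>t. X0)" by (simp add: P_def)
  have PS: "P (Suc j) = (\<lambda>t. X0 + integral {0..t} (\<lambda>s. prod (M s) (P j s)))" for j
    by (simp add: P_def)
  have Pcont: "continuous_on {0..r} (P j)" for j
  proof (induction j)
    case 0 then show ?case by (simp add: P0)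
  next
    case (Suc j)
    have "(\<lambda>s. prod (M s) (P j s)) integrable_on {0..r}" using integ[OF Suc] r by auto
    then show ?case unfolding PS by (intro continuous_intros indefinite_integral_continuous_1)
  qed
  define D where "D j t = P (Suc j) t - P j t" for j t
  define c where "c = norm X0"
  have Dint: "((\<lambda>s. prod (M s) (D j s)) has_integral D (Suc j) t) {0..t}" if t: "t \<in> {0..r}" for j t
  proof -
    have "D (Suc j) t = integral {0..t} (\<lambda>s. prod (M s) (P (Suc j) s)) - integral {0..t} (\<lambda>s. prod (M s) (P j s))"
      unfolding D_def PS by simp
    also have "\<dots> = integral {0..t} (\<lambda>s. prod (M s) (D j s))"
      unfolding D_def diff_right
      by (rule integral_diff[symmetric]) (use integ[OF Pcont t] in auto)
    finally show ?thesis
      using integ[of "D j" t] Pcont t unfolding D_def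
      by (metis (no_types) continuous_on_diff integrable_integral)
  qed
  have Dbnd: "\<forall>t\<in>{0..r}. norm (D j t) \<le> c * (L * (t - 0))^(Suc j) / fact (Suc j)" for j
  proof (induction j)
    case 0
    show ?case
    proof
      fix t assume t: "t \<in> {0..r}"
      have "D 0 t = integral {0..t} (\<lambda>s. prod (M s) X0)" unfolding D_def PS P0 by simp
      also have "norm \<dots> \<le> integral {0..t} (\<lambda>s. L * (c * (L * (s - 0))^0 / fact 0))"
      proof (rule Henstock_Kurzweil_Integration.integral_norm_bound_integral)
        show "(\<lambda>s. prod (M s) X0) integrable_on {0..t}" using integ[of "\<lambda>s. X0" t] t by auto
        show "(\<lambda>s. L * (c * (L * (s - 0)) ^ 0 / fact 0)) integrable_on {0..t}"
          using pow_fact_integral[of 0 t L c 0] t by auto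
        fix s assume "s \<in> {0..t}"
        then show "norm (prod (M s) X0) \<le> L * (c * (L * (s - 0)) ^ 0 / fact 0)"
          using pbnd[of s X0] t by (auto simp: c_def)
      qed
      also have "\<dots> = c * (L * (t - 0))^(Suc 0) / fact (Suc 0)"
        using t by (intro integral_unique pow_fact_integral) auto
      finally show "norm (D 0 t) \<le> c * (L * (t - 0))^(Suc 0) / fact (Suc 0)" .
    qed
  next
    case (Suc j)
    show ?case
    proof
      fix t assume t: "t \<in> {0..r}"
      have "norm (D (Suc j) t) = norm (integral {0..t} (\<lambda>s. prod (M s) (D j s)))"
        using integral_unique[OF Dint[OF t, of j]] by simp
      also have "\<dots> \<le> integral {0..t} (\<lambda>s. L * (c * (L * (s - 0))^(Suc j) / fact (Suc j)))"
      proof (rule Henstock_Kurzweil_Integration.integral_norm_bound_integral)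
        show "(\<lambda>s. prod (M s) (D j s)) integrable_on {0..t}" using Dint[OF t] by blast
        show "(\<lambda>s. L * (c * (L * (s - 0)) ^ Suc j / fact (Suc j))) integrable_on {0..t}"
          using pow_fact_integral[of 0 t L c "Suc j"] t by auto
        fix s assume s: "s \<in> {0..t}"
        then have s': "s \<in> {0..r}" using t by auto
        have "norm (prod (M s) (D j s)) \<le> L * norm (D j s)" by (rule pbnd[OF s'])
        also have "\<dots> \<le> L * (c * (L * (s - 0))^(Suc j) / fact (Suc j))"
          using Suc.IH s' L0 by (intro mult_left_mono) auto
        finally show "norm (prod (M s) (D j s)) \<le> L * (c * (L * (s - 0))^(Suc j) / fact (Suc j))" .
      qed
      also have "\<dots> = c * (L * (t - 0))^(Suc (Suc j)) / fact (Suc (Suc j))"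
        using t by (intro integral_unique pow_fact_integral) auto
      finally show "norm (D (Suc j) t) \<le> c * (L * (t - 0))^(Suc (Suc j)) / fact (Suc (Suc j))" .
    qed
  qed
  define Mb where "Mb i = c * (L * r)^(Suc i) / fact (Suc i)" for i
  have Dbnd': "norm (D i t) \<le> Mb i" if t: "t \<in> {0..r}" for i t
  proof -
    have "norm (D i t) \<le> c * (L * (t - 0))^(Suc i) / fact (Suc i)" using Dbnd t by blast
    also have "\<dots> \<le> Mb i" unfolding Mb_def
      using t L0 by (intro divide_right_mono mult_left_mono power_mono mult_left_mono) (auto simp: c_def)
    finally show ?thesis .
  qed
  have summ: "summable Mb"
  proof -
    have "summable (\<lambda>n. (L * r) ^ n /\<^sub>R fact n)" using exp_converges sums_summable by blast
    then have "summable (\<lambda>n. (L * r) ^ (n + 1) /\<^sub>R fact (n + 1))"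
      by (rule summable_ignore_initial_segment)
    then have "summable (\<lambda>n. c * ((L * r) ^ (n + 1) /\<^sub>R fact (n + 1)))" by (rule summable_mult)
    then show ?thesis unfolding Mb_def by (simp add: divide_inverse mult_ac)
  qed
  define S where "S t = (\<Sum>i. D i t)" for t
  have ul: "uniform_limit {0..r} (\<lambda>n t. \<Sum>i<n. D i t) S sequentially"
    unfolding S_def by (rule Weierstrass_m_test[OF Dbnd' summ])
  have Ptel: "P n t = X0 + (\<Sum>i<n. D i t)" for n t
    by (induction n) (auto simp: P0 D_def)
  have Scont: "continuous_on {0..r} S"
  proof (rule uniform_limit_theorem[OF _ ul])
    show "\<forall>\<^sub>F n in sequentially. continuous_on {0..r} (\<lambda>t. \<Sum>i<n. D i t)"
      unfolding D_def by (intro always_eventually allI continuous_intros Pcont)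
  qed simp
  define X where "X t = X0 + S t" for t
  have Xcont: "continuous_on {0..r} X" unfolding X_def by (intro continuous_intros Scont)
  have D0: "D i 0 = 0" for i
    by (cases i) (auto simp: D_def PS P0)
  have X0: "X 0 = X0" unfolding X_def S_def D0 by simp
  have Xint: "((\<lambda>s. prod (M s) (X s)) has_integral (X t - X0)) {0..t}" if t: "t \<in> {0..r}" for t
  proof -
    define I where "I j = integral {0..t} (\<lambda>s. prod (M s) (P j s))" for j
    have "(\<lambda>n. \<Sum>i<n. D i t) \<longlonglongrightarrow> S t"
      using tendsto_uniform_limitI[OF ul t] .
    then have "(\<lambda>n. \<Sum>i<Suc n. D i t) \<longlonglongrightarrow> S t" by (rule LIMSEQ_Suc)
    moreover have "I = (\<lambda>j. \<Sum>i<Suc j. D i t)"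
    proof
      fix j show "I j = (\<Sum>i<Suc j. D i t)"
        using Ptel[of "Suc j" t] PS[of j] by (auto simp: I_def simp del: sum.lessThan_Suc)
    qed
    ultimately have lim1: "I \<longlonglongrightarrow> S t" by simp
    have lim2: "I \<longlonglongrightarrow> integral {0..t} (\<lambda>s. prod (M s) (X s))"
    proof (rule LIMSEQ_I)
      fix e :: real assume e: "e > 0"
      define e' where "e' = e / (L * r + 1)"
      have "L * r \<ge> 0" using L0 r by simp
      then have e': "e' > 0" using e by (simp add: e'_def)
      obtain N where N: "\<And>n. n \<ge> N \<Longrightarrow> \<forall>x\<in>{0..r}. dist (\<Sum>i<n. D i x) (S x) < e'"
        using uniform_limitD[OF ul e'] unfolding eventually_sequentially by blast
      show "\<exists>N. \<forall>n\<ge>N. norm (I n - integral {0..t} (\<lambda>s. prod (M s) (X s))) < e"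
      proof (intro exI allI impI)
        fix n assume n: "n \<ge> N"
        have "I n - integral {0..t} (\<lambda>s. prod (M s) (X s)) = integral {0..t} (\<lambda>s. prod (M s) (P n s - X s))"
          unfolding I_def diff_right
          by (rule integral_diff[symmetric]) (use integ[OF Pcont t] integ[OF Xcont t] in auto)
        moreover have "norm (integral {0..t} (\<lambda>s. prod (M s) (P n s - X s))) \<le> (L * e') * (t - 0)"
        proof (rule has_integral_norm_le_len)
          show "((\<lambda>s. prod (M s) (P n s - X s)) has_integral integral {0..t} (\<lambda>s. prod (M s) (P n s - X s))) {0..t}"
            using integ[of "\<lambda>s. P n s - X s" t] Pcont Xcont t
            by (metis (no_types) continuous_on_diff integrable_integral)
          show "0 \<le> t" using t by simp
          fix s assume s: "s \<in> {0..t}"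
          then have s': "s \<in> {0..r}" using t by auto
          have "norm (prod (M s) (P n s - X s)) \<le> L * norm (P n s - X s)" by (rule pbnd[OF s'])
          also have "norm (P n s - X s) = dist (\<Sum>i<n. D i s) (S s)"
            by (simp add: Ptel X_def dist_norm)
          also have "L * \<dots> \<le> L * e'" using N[OF n] s' L0 by (intro mult_left_mono) (auto intro: less_imp_le)
          finally show "norm (prod (M s) (P n s - X s)) \<le> L * e'" .
        qed
        moreover have "(L * e') * (t - 0) < e"
        proof -
          have "(L * e') * (t - 0) \<le> (L * r) * e'" using t L0 e' by (simp add: mult_ac mult_left_mono mult_right_mono)
          also have "\<dots> < (L * r + 1) * e'" using e' by simp
          also have "\<dots> = e" using \<open>L * r \<ge> 0\<close> by (simp add: e'_def)
          finally show ?thesis .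
        qed
        ultimately show "norm (I n - integral {0..t} (\<lambda>s. prod (M s) (X s))) < e" by simp
      qed
    qed
    have "S t = integral {0..t} (\<lambda>s. prod (M s) (X s))" using LIMSEQ_unique[OF lim1 lim2] .
    then show ?thesis using integ[OF Xcont t] by (simp add: X_def integrable_integral)
  qed
  show ?thesis using X0 Xcont Xint by blast
qed


lemma sbm_iff:
  fixes f :: "real \<Rightarrow> 'a::real_normed_vector"
  assumes "S \<in> sets lebesgue"
  shows "set_borel_measurable lebesgue S f \<longleftrightarrow> f \<in> borel_measurable (lebesgue_on S)"
  unfolding set_borel_measurable_def
  by (subst borel_measurable_restrict_space_iff) (use assms in auto)

lemma measurable_on_shift:
  fixes f :: "real \<Rightarrow> 'a::real_normed_vector"
  assumes "f measurable_on {c..}"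
  shows "(\<lambda>s. f (c + s)) measurable_on {0..}"
proof -
  obtain N g where N: "negligible N" and g: "\<And>n. continuous_on UNIV (g n)"
    and lim: "\<And>x. x \<notin> N \<Longrightarrow> (\<lambda>n. g n x) \<longlonglongrightarrow> (if x \<in> {c..} then f x else 0)"
    using assms unfolding measurable_on_def by blast
  show ?thesis unfolding measurable_on_def
  proof (intro exI conjI allI impI)
    show "negligible ((+) (-c) ` N)" by (rule negligible_translation[OF N])
    show "continuous_on UNIV (\<lambda>s. g n (c + s))" for n
      by (rule continuous_on_compose2[OF g]) (auto intro: continuous_intros)
    fix x assume x: "x \<notin> (+) (-c) ` N"
    then have "c + x \<notin> N" by (metis add.commute add_uminus_conv_diff diff_add_cancel image_eqI)
    from lim[OF this] show "(\<lambda>n. g n (c + x)) \<longlonglongrightarrow> (if x \<in> {0..} then f (c + x) else 0)"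
      by simp
  qed
qed

lemma bm_shift:
  fixes f :: "real \<Rightarrow> 'a::euclidean_space"
  assumes "f \<in> borel_measurable (lebesgue_on {0..})" "c \<ge> 0"
  shows "(\<lambda>s. f (c + s)) \<in> borel_measurable (lebesgue_on {0..})"
proof -
  have "f \<in> borel_measurable (lebesgue_on {c..})" using bm_mono[OF assms(1)] assms(2) by auto
  then have "f measurable_on {c..}" by (subst measurable_on_iff_borel_measurable) auto
  then have "(\<lambda>s. f (c + s)) measurable_on {0..}" by (rule measurable_on_shift)
  then show ?thesis by (subst (asm) measurable_on_iff_borel_measurable) auto
qed

lemma Linf_loc_bm: "Linf_loc U u \<Longrightarrow> u \<in> borel_measurable (lebesgue_on {0..})"
  unfolding Linf_loc_def by (subst (asm) sbm_iff) auto

lemma Linf_loc_shift: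
  assumes "Linf_loc U u" "c \<ge> 0"
  shows "Linf_loc U (\<lambda>s. u (c + s))"
proof -
  have m: "(\<lambda>s. u (c + s)) \<in> borel_measurable (lebesgue_on {0..})"
    by (rule bm_shift[OF Linf_loc_bm[OF assms(1)] assms(2)])
  have b: "bounded ((\<lambda>s. u (c + s)) ` {0..T})" for T
  proof -
    have "(\<lambda>s. u (c + s)) ` {0..T} \<subseteq> u ` {0..c+T}" using assms(2) by (auto intro: rev_image_eqI[of "c + _"])
    moreover have "bounded (u ` {0..c+T})" using assms(1) unfolding Linf_loc_def by blast
    ultimately show ?thesis using bounded_subset by blast
  qed
  show ?thesis using assms m b unfolding Linf_loc_def by (subst sbm_iff) auto
qed

lemma Linf_loc_Linf:
  assumes "Linf_loc U u" "r \<ge> 0"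
  shows "Linf r U u"
proof -
  have "u \<in> borel_measurable (lebesgue_on {0..r})"
    using bm_mono[OF Linf_loc_bm[OF assms(1)]] by auto
  then show ?thesis using assms unfolding Linf_loc_def Linf_def by (subst sbm_iff) auto
qed

lemma loc_lipschitz_cont:
  assumes "loc_lipschitz S g"
  shows "continuous_on S g"
  unfolding continuous_on_eq_continuous_within
proof
  fix p assume p: "p \<in> S"
  obtain e L where e: "e > 0" and L: "L-lipschitz_on (cball p e \<inter> S) g"
    using assms p unfolding loc_lipschitz_def by blast
  have "continuous_on (cball p e \<inter> S) g" by (rule lipschitz_on_continuous_on[OF L])
  then have "continuous (at p within (cball p e \<inter> S)) g"
    using p e by (simp add: continuous_on_eq_continuous_within)
  moreover have "at p within S = at p within (cball p e \<inter> S)"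
    by (rule at_within_nhd[of p "ball p e"]) (use e in auto)
  ultimately show "continuous (at p within S) g" by simp
qed

lemma comp_measurable_bounded:
  fixes G :: "'y::euclidean_space \<Rightarrow> 'v::euclidean_space \<Rightarrow> 'c::euclidean_space" and a b :: real
  assumes G: "continuous_on (\<Omega> \<times> U) (\<lambda>(y, v). G y v)"
    and y: "continuous_on {a..b} y" "y ` {a..b} \<subseteq> \<Omega>"
    and u: "u \<in> borel_measurable (lebesgue_on {a..b})" "u ` {a..b} \<subseteq> U" "bounded (u ` {a..b})"
    and U: "closed U"
  shows "(\<lambda>s. G (y s) (u s)) \<in> borel_measurable (lebesgue_on {a..b})"
    and "\<exists>B. \<forall>s\<in>{a..b}. norm (G (y s) (u s)) \<le> B"
proof -
  define K0 where "K0 = y ` {a..b} \<times> closure (u ` {a..b})"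
  have cK: "compact K0" unfolding K0_def
    using compact_continuous_image[OF y(1) compact_Icc] u(3)
    by (intro compact_Times) (auto simp: compact_closure)
  have KS: "K0 \<subseteq> \<Omega> \<times> U" unfolding K0_def using y(2) closure_minimal[OF u(2) U] by auto
  define G' where "G' = (\<lambda>p. G (fst p) (snd p))"
  have G'eq: "G' = (\<lambda>(y, v). G y v)" by (auto simp: G'_def)
  have cG: "continuous_on K0 G'" unfolding G'eq by (rule continuous_on_subset[OF G KS])
  have inK: "(y s, u s) \<in> K0" if "s \<in> {a..b}" for s
    unfolding K0_def using that closure_subset[of "u ` {a..b}"] by auto
  have pm: "(\<lambda>s. (y s, u s)) \<in> borel_measurable (lebesgue_on {a..b})"
    by (rule borel_measurable_Pair[OF bm_cont[OF y(1)] u(1)])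
  have pm2: "(\<lambda>s. (y s, u s)) \<in> lebesgue_on {a..b} \<rightarrow>\<^sub>M restrict_space borel K0"
    by (rule measurable_restrict_space2[OF _ pm]) (use inK in auto)
  have "(\<lambda>s. G' (y s, u s)) \<in> borel_measurable (lebesgue_on {a..b})"
    by (rule measurable_compose[OF pm2 borel_measurable_continuous_on_restrict[OF cG]])
  then show "(\<lambda>s. G (y s) (u s)) \<in> borel_measurable (lebesgue_on {a..b})" by (simp add: G'_def)
  have "compact (G' ` K0)" by (rule compact_continuous_image[OF cG cK])
  then obtain B where "\<forall>z\<in>G' ` K0. norm z \<le> B" using compact_imp_bounded bounded_iff by metis
  then show "\<exists>B. \<forall>s\<in>{a..b}. norm (G (y s) (u s)) \<le> B" using inK by (force simp: G'_def)
qed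

lemma C_cont:
  assumes "\<forall>i j. loc_lipschitz \<Omega> (\<lambda>y. C y $ i $ j)"
  shows "continuous_on \<Omega> C"
proof -
  have "continuous_on \<Omega> (\<lambda>y. \<chi> i. \<chi> j. C y $ i $ j)"
    using assms loc_lipschitz_cont by (intro continuous_on_vec_lambda) blast
  then show ?thesis by simp
qed


lemma bilinear_mm_neg: "bilinear (\<lambda>(A::real^'n^'n) (X::real^'n^'n). - (X ** A))"
  unfolding bilinear_def linear_iff
  by (auto simp: matrix_matrix_mult_def vec_eq_iff sum.distrib algebra_simps sum_distrib_left)

lemma bbnd:
  assumes "bounded_bilinear h" "\<forall>s\<in>S. norm (f s) \<le> B1" "\<forall>s\<in>S. norm (g s) \<le> B2"
  shows "\<exists>B. \<forall>s\<in>S. norm (h (f s) (g s)) \<le> B"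
proof -
  obtain Kp where Kp: "Kp > 0" "\<And>x y. norm (h x y) \<le> norm x * norm y * Kp"
    using bounded_bilinear.pos_bounded[OF assms(1)] by blast
  have "norm (h (f s) (g s)) \<le> B1 * B2 * Kp" if "s \<in> S" for s
  proof -
    have "norm (h (f s) (g s)) \<le> norm (f s) * norm (g s) * Kp" by (rule Kp(2))
    also have "\<dots> \<le> B1 * B2 * Kp"
      using assms(2,3) that Kp(1) by (intro mult_right_mono mult_mono) (auto intro: order.trans[OF norm_ge_zero])
    finally show ?thesis .
  qed
  then show ?thesis by blast
qed

lemma bm_bnd_int:
  fixes f :: "real \<Rightarrow> 'a::euclidean_space"
  assumes "f \<in> borel_measurable (lebesgue_on {a..b})" "\<exists>B. \<forall>s\<in>{a..b}. norm (f s) \<le> B"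
    "{c..d} \<subseteq> {a..b}"
  shows "f integrable_on {c..d}"
proof -
  obtain B where "\<forall>s\<in>{a..b}. norm (f s) \<le> B" using assms(2) by blast
  then have "f integrable_on {a..b}" using bm_integrable[OF assms(1)] by blast
  then show ?thesis using integrable_subinterval_real assms(3) by blast
qed

lemma cont_bnd:
  fixes f :: "real \<Rightarrow> 'a::real_normed_vector"
  shows "continuous_on {a..b} f \<Longrightarrow> \<exists>B. \<forall>s\<in>{a..b}. norm (f s) \<le> B"
  using cont_bounded by metis

lemma matrix_inv_eq:
  fixes A B :: "real^'n^'n"
  assumes "A ** B = mat 1" "B ** A = mat 1"
  shows "matrix_inv A = B"
  unfolding matrix_inv_def
proof (rule some_equality)
  show "A ** B = mat 1 \<and> B ** A = mat 1" using assms by simp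
  fix A' assume A': "A ** A' = mat 1 \<and> A' ** A = mat 1"
  have "A' = A' ** (A ** B)" using assms by simp
  also have "\<dots> = (A' ** A) ** B" by (simp add: matrix_mul_assoc)
  also have "\<dots> = B" using A' by simp
  finally show "A' = B" .
qed

locale window =
  fixes A :: "real^'k \<Rightarrow> real^'m \<Rightarrow> real^'n^'n" and b :: "real^'k \<Rightarrow> real^'m \<Rightarrow> real^'n"
    and C :: "real^'k \<Rightarrow> real^'n^'k" and f :: "real^'k \<Rightarrow> real^'m \<Rightarrow> real^'k"
    and r :: real and ys :: "real \<Rightarrow> real^'k" and us :: "real \<Rightarrow> real^'m" and xs :: "real \<Rightarrow> real^'n"
    and K :: real
  assumes r: "r > 0"
    and Mm: "(\<lambda>s. A (ys s) (us s)) \<in> borel_measurable (lebesgue_on {0..r})"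
    and MK: "\<And>s. s \<in> {0..r} \<Longrightarrow> norm (A (ys s) (us s)) \<le> K"
    and Bm: "(\<lambda>s. b (ys s) (us s)) \<in> borel_measurable (lebesgue_on {0..r})"
    and BK: "\<And>s. s \<in> {0..r} \<Longrightarrow> norm (b (ys s) (us s)) \<le> K"
    and Cc: "continuous_on {0..r} (\<lambda>s. C (ys s))"
    and xc: "continuous_on {0..r} xs"
    and xi: "\<And>t. t \<in> {0..r} \<Longrightarrow> ((\<lambda>s. A (ys s) (us s) *v xs s + b (ys s) (us s)) has_integral (xs t - xs 0)) {0..t}"
    and yi: "\<And>t. t \<in> {0..r} \<Longrightarrow> ((\<lambda>s. f (ys s) (us s) + C (ys s) *v xs s) has_integral (ys t - ys 0)) {0..t}"
begin

abbreviation "M s \<equiv> A (ys s) (us s)"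
abbreviation "Bv s \<equiv> b (ys s) (us s)"
abbreviation "Phi \<equiv> obs_Phi A r ys us"

lemma MKb: "\<exists>B. \<forall>s\<in>{0..r}. norm (M s) \<le> B" using MK by blast
lemma BKb: "\<exists>B. \<forall>s\<in>{0..r}. norm (Bv s) \<le> B" using BK by blast

lemma Phi_spec: "Phi 0 = mat 1 \<and> continuous_on {0..r} Phi \<and>
    (\<forall>t\<in>{0..r}. ((\<lambda>s. M s ** Phi s) has_integral (Phi t - mat 1)) {0..t})"
proof -
  have "\<exists>X. X 0 = mat 1 \<and> continuous_on {0..r} X \<and>
           (\<forall>t\<in>{0..r}. ((\<lambda>s. M s ** X s) has_integral (X t - mat 1)) {0..t})"
    using picard_exists[OF bb_mm Mm MK, of "mat 1"] r by simp
  then show ?thesis unfolding obs_Phi_def by (rule someI_ex)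
qed

lemma Phi0: "Phi 0 = mat 1" using Phi_spec by blast
lemma Phic: "continuous_on {0..r} Phi" using Phi_spec by blast
lemma Phii: "t \<in> {0..r} \<Longrightarrow> ((\<lambda>s. M s ** Phi s) has_integral (Phi t - mat 1)) {0..t}"
  using Phi_spec by blast

lemma Psi_ex: "\<exists>Psi. Psi 0 = mat 1 \<and> continuous_on {0..r} Psi \<and>
    (\<forall>t\<in>{0..r}. ((\<lambda>s. - (Psi s ** M s)) has_integral (Psi t - mat 1)) {0..t})"
proof -
  have bb: "bounded_bilinear (\<lambda>(A::real^'n^'n) (X::real^'n^'n). - (X ** A))"
    using bilinear_mm_neg bilinear_conv_bounded_bilinear by blast
  show ?thesis using picard_exists[OF bb Mm MK, of "mat 1"] r by simp
qed

definition "Psi = (SOME Psi. Psi 0 = mat 1 \<and> continuous_on {0..r} Psi \<and>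
    (\<forall>t\<in>{0..r}. ((\<lambda>s. - (Psi s ** M s)) has_integral (Psi t - mat 1)) {0..t}))"

lemma Psi_spec: "Psi 0 = mat 1 \<and> continuous_on {0..r} Psi \<and>
    (\<forall>t\<in>{0..r}. ((\<lambda>s. - (Psi s ** M s)) has_integral (Psi t - mat 1)) {0..t})"
  unfolding Psi_def by (rule someI_ex[OF Psi_ex])

lemma Psi0: "Psi 0 = mat 1" using Psi_spec by blast
lemma Psic: "continuous_on {0..r} Psi" using Psi_spec by blast
lemma Psii: "t \<in> {0..r} \<Longrightarrow> ((\<lambda>s. - (Psi s ** M s)) has_integral (Psi t - mat 1)) {0..t}"
  using Psi_spec by blast

lemma Phibm: "Phi \<in> borel_measurable (lebesgue_on {0..r})" by (rule bm_cont[OF Phic])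
lemma Psibm: "Psi \<in> borel_measurable (lebesgue_on {0..r})" by (rule bm_cont[OF Psic])
lemma Phib: "\<exists>B. \<forall>s\<in>{0..r}. norm (Phi s) \<le> B" by (rule cont_bnd[OF Phic])
lemma Psib: "\<exists>B. \<forall>s\<in>{0..r}. norm (Psi s) \<le> B" by (rule cont_bnd[OF Psic])

lemma MPhibm: "(\<lambda>s. M s ** Phi s) \<in> borel_measurable (lebesgue_on {0..r})"
  using bm_bilinear[OF bilinear_mm Mm Phibm] by simp
lemma MPhib: "\<exists>B. \<forall>s\<in>{0..r}. norm (M s ** Phi s) \<le> B"
  using bbnd[OF bb_mm MKb[THEN someI_ex] Phib[THEN someI_ex]] by simp
lemma nPsiMbm: "(\<lambda>s. - (Psi s ** M s)) \<in> borel_measurable (lebesgue_on {0..r})"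
  using bm_bilinear[OF bilinear_mm_neg Mm Psibm] by simp
lemma nPsiMb: "\<exists>B. \<forall>s\<in>{0..r}. norm (- (Psi s ** M s)) \<le> B"
proof -
  have bb: "bounded_bilinear (\<lambda>(A::real^'n^'n) (X::real^'n^'n). - (X ** A))"
    using bilinear_mm_neg bilinear_conv_bounded_bilinear by blast
  show ?thesis using bbnd[OF bb MKb[THEN someI_ex] Psib[THEN someI_ex]] by simp
qed

lemma PsiPhi: assumes t: "t \<in> {0..r}" shows "Psi t ** Phi t = mat 1"
proof -
  obtain B1 where B1: "\<forall>s\<in>{0..r}. norm (- (Psi s ** M s)) \<le> B1" using nPsiMb by blast
  obtain B2 where B2: "\<forall>s\<in>{0..r}. norm (M s ** Phi s) \<le> B2" using MPhib by blast
  have sub: "{0..t} \<subseteq> {0..r}" using t by auto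
  have "((\<lambda>s. (- (Psi s ** M s)) ** Phi s + Psi s ** (M s ** Phi s)) has_integral
            (Psi t ** Phi t - Psi 0 ** Phi 0)) {0..t}"
  proof (rule product_rule_integral[OF bb_mm, of 0 t])
    show "0 \<le> t" using t by simp
    show "((\<lambda>s. - (Psi s ** M s)) has_integral Psi t' - Psi 0) {0..t'}" if "t' \<in> {0..t}" for t'
      using Psii[of t'] that t Psi0 by auto
    show "((\<lambda>s. M s ** Phi s) has_integral Phi t' - Phi 0) {0..t'}" if "t' \<in> {0..t}" for t'
      using Phii[of t'] that t Phi0 by auto
    show "norm (- (Psi s ** M s)) \<le> max B1 B2" if "s \<in> {0..t}" for s
      using B1 that sub by (auto intro: le_max_iff_disj[THEN iffD2])
    show "norm (M s ** Phi s) \<le> max B1 B2" if "s \<in> {0..t}" for s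
      using B2 that sub by (auto intro: le_max_iff_disj[THEN iffD2])
    show "(\<lambda>s. - (Psi s ** M s) ** Phi s) integrable_on {0..t}"
      by (rule bm_bnd_int[OF _ _ sub])
        (use bm_bilinear[OF bilinear_mm nPsiMbm Phibm] bbnd[OF bb_mm nPsiMb[THEN someI_ex] Phib[THEN someI_ex]] in simp_all)
    show "(\<lambda>s. Psi s ** (M s ** Phi s)) integrable_on {0..t}"
      by (rule bm_bnd_int[OF _ _ sub])
        (use bm_bilinear[OF bilinear_mm Psibm MPhibm] bbnd[OF bb_mm Psib[THEN someI_ex] MPhib[THEN someI_ex]] in simp_all)
  qed
  moreover have "(- (Psi s ** M s)) ** Phi s + Psi s ** (M s ** Phi s) = 0" for s
    using bilinear_lneg[OF bilinear_mm, of "Psi s ** M s" "Phi s"] by (simp add: matrix_mul_assoc)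
  ultimately have "((\<lambda>s. 0) has_integral (Psi t ** Phi t - Psi 0 ** Phi 0)) {0..t}" by simp
  then have "Psi t ** Phi t - Psi 0 ** Phi 0 = 0" using has_integral_0 has_integral_unique by blast
  then show ?thesis using Psi0 Phi0 by simp
qed

lemma PhiPsi: "t \<in> {0..r} \<Longrightarrow> Phi t ** Psi t = mat 1"
  using PsiPhi matrix_left_right_inverse by blast

lemma invPhi: "t \<in> {0..r} \<Longrightarrow> matrix_inv (Phi t) = Psi t"
  using PsiPhi PhiPsi matrix_inv_eq by blast

definition "h \<tau> = integral {0..\<tau>} (\<lambda>s. Psi s *v Bv s)"
abbreviation "theta \<equiv> obs_theta A b r ys us"

lemma PsiBbm: "(\<lambda>s. Psi s *v Bv s) \<in> borel_measurable (lebesgue_on {0..r})"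
  using bm_bilinear[OF bilinear_mv Psibm Bm] by simp
lemma PsiBb: "\<exists>B. \<forall>s\<in>{0..r}. norm (Psi s *v Bv s) \<le> B"
  using bbnd[OF bb_mv Psib[THEN someI_ex] BKb[THEN someI_ex]] by simp

lemma hi: "\<tau> \<in> {0..r} \<Longrightarrow> ((\<lambda>s. Psi s *v Bv s) has_integral h \<tau>) {0..\<tau>}"
  unfolding h_def by (rule integrable_integral, rule bm_bnd_int[OF PsiBbm PsiBb]) auto

lemma hc: "continuous_on {0..r} h"
  unfolding h_def by (rule indefinite_integral_continuous_1, rule bm_bnd_int[OF PsiBbm PsiBb]) auto

lemma h0: "h 0 = 0" unfolding h_def by simp

lemma theta_eq: assumes "\<tau> \<in> {0..r}" shows "theta \<tau> = Phi \<tau> *v h \<tau>"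
proof -
  have "theta \<tau> = integral {0..\<tau>} (\<lambda>s. Phi \<tau> *v (Psi s *v Bv s))"
    unfolding obs_theta_def
    by (rule integral_cong) (use assms invPhi in \<open>auto simp: matrix_vector_mul_assoc\<close>)
  also have "\<dots> = Phi \<tau> *v h \<tau>"
    using has_integral_linear[OF hi[OF assms] bounded_bilinear.bounded_linear_right[OF bb_mv, of "Phi \<tau>"]]
    by (simp add: o_def integral_unique)
  finally show ?thesis .
qed

lemma thetac: "continuous_on {0..r} theta"
proof -
  have "continuous_on {0..r} (\<lambda>s. Phi s *v h s)"
    by (rule bounded_bilinear.continuous_on[OF bb_mv Phic hc])
  then show ?thesis by (rule continuous_on_eq) (simp add: theta_eq)
qed

lemma theta_int: assumes t: "t \<in> {0..r}"
  shows "((\<lambda>s. M s *v theta s + Bv s) has_integral theta t) {0..t}"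
proof -
  obtain B1 where B1: "\<forall>s\<in>{0..r}. norm (M s ** Phi s) \<le> B1" using MPhib by blast
  obtain B2 where B2: "\<forall>s\<in>{0..r}. norm (Psi s *v Bv s) \<le> B2" using PsiBb by blast
  have sub: "{0..t} \<subseteq> {0..r}" using t by auto
  have "((\<lambda>s. (M s ** Phi s) *v h s + Phi s *v (Psi s *v Bv s)) has_integral
            (Phi t *v h t - Phi 0 *v h 0)) {0..t}"
  proof (rule product_rule_integral[OF bb_mv, of 0 t])
    show "0 \<le> t" using t by simp
    show "((\<lambda>s. M s ** Phi s) has_integral Phi t' - Phi 0) {0..t'}" if "t' \<in> {0..t}" for t'
      using Phii[of t'] that t Phi0 by auto
    show "((\<lambda>s. Psi s *v Bv s) has_integral h t' - h 0) {0..t'}" if "t' \<in> {0..t}" for t'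
      using hi[of t'] that t h0 by auto
    show "norm (M s ** Phi s) \<le> max B1 B2" if "s \<in> {0..t}" for s
      using B1 that sub by (auto intro: le_max_iff_disj[THEN iffD2])
    show "norm (Psi s *v Bv s) \<le> max B1 B2" if "s \<in> {0..t}" for s
      using B2 that sub by (auto intro: le_max_iff_disj[THEN iffD2])
    show "(\<lambda>s. (M s ** Phi s) *v h s) integrable_on {0..t}"
      by (rule bm_bnd_int[OF _ _ sub])
        (use bm_bilinear[OF bilinear_mv MPhibm bm_cont[OF hc]] bbnd[OF bb_mv MPhib[THEN someI_ex] cont_bnd[OF hc, THEN someI_ex]] in simp_all)
    show "(\<lambda>s. Phi s *v (Psi s *v Bv s)) integrable_on {0..t}"
      by (rule bm_bnd_int[OF _ _ sub])
        (use bm_bilinear[OF bilinear_mv Phibm PsiBbm] bbnd[OF bb_mv Phib[THEN someI_ex] PsiBb[THEN someI_ex]] in simp_all)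
  qed
  moreover have eqs: "(M s ** Phi s) *v h s + Phi s *v (Psi s *v Bv s) = M s *v theta s + Bv s" if "s \<in> {0..t}" for s
  proof -
    have s: "s \<in> {0..r}" using that sub by auto
    show ?thesis using theta_eq[OF s] PhiPsi[OF s] by (simp add: matrix_vector_mul_assoc)
  qed
  ultimately have "((\<lambda>s. M s *v theta s + Bv s) has_integral (Phi t *v h t - Phi 0 *v h 0)) {0..t}"
    by (subst (asm) has_integral_cong[OF eqs]) auto
  then show ?thesis using theta_eq[OF t] h0 by simp
qed

lemma K0: "K \<ge> 0" using MK[of 0] r by (meson atLeastAtMost_iff norm_ge_zero order.trans less_imp_le order_refl)

lemma x_formula: assumes t: "t \<in> {0..r}" shows "xs t = Phi t *v xs 0 + theta t"
proof -
  define e where "e s = xs s - Phi s *v xs 0 - theta s" for s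
  obtain Kp where Kp: "Kp > 0" "\<And>(x::real^'n^'n) (y::real^'n). norm (x *v y) \<le> norm x * norm y * Kp"
    using bounded_bilinear.pos_bounded[OF bb_mv] by fastforce
  have "e t = 0"
  proof (rule gronwall_zero[of 0 r e "\<lambda>s. M s *v e s" "K * Kp"])
    show "0 \<le> r" using r by simp
    show "continuous_on {0..r} e" unfolding e_def
      by (intro continuous_intros xc thetac bounded_bilinear.continuous_on[OF bb_mv Phic])
    show "0 \<le> K * Kp" using K0 Kp by simp
    show "t \<in> {0..r}" by fact
    fix s assume s: "s \<in> {0..r}"
    have "norm (M s *v e s) \<le> norm (M s) * norm (e s) * Kp" by (rule Kp(2))
    also have "\<dots> \<le> K * norm (e s) * Kp" using MK[OF s] Kp by (intro mult_right_mono) auto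
    finally show "norm (M s *v e s) \<le> K * Kp * norm (e s)" by (simp add: mult_ac)
  next
    fix t' assume t': "t' \<in> {0..r}"
    have p1: "((\<lambda>s. (M s ** Phi s) *v xs 0) has_integral ((Phi t' - mat 1) *v xs 0)) {0..t'}"
      using has_integral_linear[OF Phii[OF t'] bounded_bilinear.bounded_linear_left[OF bb_mv, of "xs 0"]]
      by (simp add: o_def)
    have "((\<lambda>s. (M s *v xs s + Bv s) - (M s ** Phi s) *v xs 0 - (M s *v theta s + Bv s)) has_integral
             ((xs t' - xs 0) - (Phi t' - mat 1) *v xs 0 - theta t')) {0..t'}"
      by (intro has_integral_diff xi[OF t'] p1 theta_int[OF t'])
    moreover have "(M s *v xs s + Bv s) - (M s ** Phi s) *v xs 0 - (M s *v theta s + Bv s) = M s *v e s" for s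
      unfolding e_def by (simp add: matrix_vector_mul_assoc[symmetric] matrix_vector_mult_diff_distrib)
    moreover have "(xs t' - xs 0) - (Phi t' - mat 1) *v xs 0 - theta t' = e t'"
      unfolding e_def by (simp add: matrix_vector_mult_diff_rdistrib)
    ultimately show "((\<lambda>s. M s *v e s) has_integral e t') {0..t'}" by simp
  qed
  then show ?thesis unfolding e_def by (simp add: algebra_simps)
qed

end


lemma bl_transpose: "bounded_linear (transpose :: real^'n^'m \<Rightarrow> real^'m^'n)"
proof -
  have "linear (transpose :: real^'n^'m \<Rightarrow> real^'m^'n)"
    by (rule linearI) (auto simp: transpose_def vec_eq_iff)
  then show ?thesis using linear_conv_bounded_linear by blast
qed

context window begin

abbreviation "Cy s \<equiv> C (ys s)"
definition "R \<tau> = integral {0..\<tau>} (\<lambda>s. Cy s ** Phi s)"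

lemma CPhic: "continuous_on {0..r} (\<lambda>s. Cy s ** Phi s)"
  by (rule bounded_bilinear.continuous_on[OF bb_mm Cc Phic])

lemma cont_int: "continuous_on {0..r} g \<Longrightarrow> \<tau> \<in> {0..r} \<Longrightarrow> (g :: real \<Rightarrow> 'a::euclidean_space) integrable_on {0..\<tau>}"
  by (rule bm_bnd_int[OF bm_cont cont_bnd]) auto

lemma Ri: "\<tau> \<in> {0..r} \<Longrightarrow> ((\<lambda>s. Cy s ** Phi s) has_integral R \<tau>) {0..\<tau>}"
  unfolding R_def by (rule integrable_integral, rule cont_int[OF CPhic])

lemma Rc: "continuous_on {0..r} R"
  unfolding R_def by (rule indefinite_integral_continuous_1, rule cont_int[OF CPhic]) (use r in auto)

lemma q_eq: assumes "\<tau> \<in> {0..r}" shows "obs_q A C r ys us \<tau> = transpose (R \<tau>)"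
proof -
  have "obs_q A C r ys us \<tau> = integral {0..\<tau>} (\<lambda>s. transpose (Cy s ** Phi s))"
    unfolding obs_q_def by (simp add: matrix_transpose_mul)
  also have "\<dots> = transpose (R \<tau>)"
    using has_integral_linear[OF Ri[OF assms] bl_transpose] by (simp add: o_def integral_unique)
  finally show ?thesis .
qed

lemma p_eq: assumes t: "\<tau> \<in> {0..r}" shows "obs_p A b C f r ys us \<tau> = R \<tau> *v xs 0"
proof -
  have cx: "continuous_on {0..r} (\<lambda>s. Cy s *v xs s)"
    by (rule bounded_bilinear.continuous_on[OF bb_mv Cc xc])
  have ct: "continuous_on {0..r} (\<lambda>s. Cy s *v theta s)"
    by (rule bounded_bilinear.continuous_on[OF bb_mv Cc thetac])
  obtain I1 where I1: "((\<lambda>s. Cy s *v xs s) has_integral I1) {0..\<tau>}" using cont_int[OF cx t] by blast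
  obtain I2 where I2: "((\<lambda>s. Cy s *v theta s) has_integral I2) {0..\<tau>}" using cont_int[OF ct t] by blast
  have "((\<lambda>s. (f (ys s) (us s) + Cy s *v xs s) - Cy s *v xs s) has_integral (ys \<tau> - ys 0 - I1)) {0..\<tau>}"
    by (rule has_integral_diff[OF yi[OF t] I1])
  then have If: "((\<lambda>s. f (ys s) (us s)) has_integral (ys \<tau> - ys 0 - I1)) {0..\<tau>}" by simp
  have "((\<lambda>s. Cy s *v xs s - Cy s *v theta s) has_integral (I1 - I2)) {0..\<tau>}"
    by (rule has_integral_diff[OF I1 I2])
  moreover have "Cy s *v xs s - Cy s *v theta s = (Cy s ** Phi s) *v xs 0" if "s \<in> {0..\<tau>}" for s
  proof -
    have s: "s \<in> {0..r}" using that t by auto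
    show ?thesis using x_formula[OF s]
      by (simp add: matrix_vector_mul_assoc[symmetric] matrix_vector_mult_diff_distrib[symmetric])
  qed
  ultimately have "((\<lambda>s. (Cy s ** Phi s) *v xs 0) has_integral (I1 - I2)) {0..\<tau>}"
    by (subst (asm) has_integral_cong) auto
  moreover have "((\<lambda>s. (Cy s ** Phi s) *v xs 0) has_integral (R \<tau> *v xs 0)) {0..\<tau>}"
    using has_integral_linear[OF Ri[OF t] bounded_bilinear.bounded_linear_left[OF bb_mv, of "xs 0"]]
    by (simp add: o_def)
  ultimately have "I1 - I2 = R \<tau> *v xs 0" using has_integral_unique by blast
  then show ?thesis unfolding obs_p_def using integral_unique[OF If] integral_unique[OF I2] by simp
qed

lemma RRc: "continuous_on {0..r} (\<lambda>\<tau>. transpose (R \<tau>) ** R \<tau>)"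
proof -
  have "continuous_on {0..r} (\<lambda>\<tau>. transpose (R \<tau>))"
    by (rule linear_continuous_on_compose[OF Rc bounded_linear.linear[OF bl_transpose]])
  then show ?thesis by (rule bounded_bilinear.continuous_on[OF bb_mm _ Rc])
qed

lemma Q_eq: "obs_Q A C r ys us = integral {0..r} (\<lambda>\<tau>. transpose (R \<tau>) ** R \<tau>)"
  unfolding obs_Q_def by (rule integral_cong) (auto simp: q_eq)

lemma Qi: "((\<lambda>\<tau>. transpose (R \<tau>) ** R \<tau>) has_integral obs_Q A C r ys us) {0..r}"
  unfolding Q_eq by (rule integrable_integral, rule cont_int[OF RRc]) (use r in auto)

lemma qp: "integral {0..r} (\<lambda>\<tau>. obs_q A C r ys us \<tau> *v obs_p A b C f r ys us \<tau>) = obs_Q A C r ys us *v xs 0"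
proof -
  have "integral {0..r} (\<lambda>\<tau>. obs_q A C r ys us \<tau> *v obs_p A b C f r ys us \<tau>) =
        integral {0..r} (\<lambda>\<tau>. (transpose (R \<tau>) ** R \<tau>) *v xs 0)"
    by (rule integral_cong) (auto simp: q_eq p_eq matrix_vector_mul_assoc)
  also have "\<dots> = obs_Q A C r ys us *v xs 0"
    using has_integral_linear[OF Qi bounded_bilinear.bounded_linear_left[OF bb_mv, of "xs 0"]]
    by (simp add: o_def integral_unique)
  finally show ?thesis .
qed

lemma P_eq: assumes "invertible (obs_Q A C r ys us)" shows "obs_P A b C f r ys us = xs r"
proof -
  obtain Q' where Q': "obs_Q A C r ys us ** Q' = mat 1" "Q' ** obs_Q A C r ys us = mat 1"
    using assms unfolding invertible_def by blast
  have "matrix_inv (obs_Q A C r ys us) = Q'" using matrix_inv_eq[OF Q'] .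
  then have "matrix_inv (obs_Q A C r ys us) *v (obs_Q A C r ys us *v xs 0) = xs 0"
    using Q'(2) by (simp add: matrix_vector_mul_assoc)
  then show ?thesis unfolding obs_P_def qp using x_formula[of r] r by simp
qed

lemma ker: assumes Qv: "obs_Q A C r ys us *v v = 0" and t: "\<tau> \<in> {0..r}"
  shows "R \<tau> *v v = 0"
proof -
  define \<phi> where "\<phi> \<tau> = (R \<tau> *v v) \<bullet> (R \<tau> *v v)" for \<tau>
  have "((\<lambda>\<tau>. (transpose (R \<tau>) ** R \<tau>) *v v) has_integral (obs_Q A C r ys us *v v)) {0..r}"
    using has_integral_linear[OF Qi bounded_bilinear.bounded_linear_left[OF bb_mv, of v]]
    by (simp add: o_def)
  then have "((\<lambda>\<tau>. v \<bullet> ((transpose (R \<tau>) ** R \<tau>) *v v)) has_integral (v \<bullet> (obs_Q A C r ys us *v v))) {0..r}"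
    using has_integral_linear[OF _ bounded_linear_inner_right[of v]] by (simp add: o_def)
  moreover have "v \<bullet> ((transpose (R \<tau>) ** R \<tau>) *v v) = \<phi> \<tau>" for \<tau>
    unfolding \<phi>_def
    by (simp add: matrix_vector_mul_assoc[symmetric] dot_lmul_matrix[symmetric] inner_commute)
  ultimately have "(\<phi> has_integral 0) {0..r}" using Qv by simp
  then have I0: "(\<phi> has_integral 0) (cbox 0 r)" by (simp add: cbox_interval)
  have c\<phi>: "continuous_on (cbox 0 r) \<phi>"
    unfolding \<phi>_def cbox_interval
    by (intro continuous_intros bounded_bilinear.continuous_on[OF bb_mv Rc])
  have "\<phi> \<tau> = 0"
    by (rule has_integral_0_cbox_imp_0[OF c\<phi> _ I0]) (use r t in \<open>auto simp: \<phi>_def box_real\<close>)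
  then show ?thesis unfolding \<phi>_def by simp
qed

lemma alt_sol:
  assumes Qv: "obs_Q A C r ys us *v v = 0" and t: "t \<in> {0..r}"
  shows "((\<lambda>s. M s *v (xs s + c *\<^sub>R (Phi s *v v)) + Bv s) has_integral
            ((xs t + c *\<^sub>R (Phi t *v v)) - (xs 0 + c *\<^sub>R (Phi 0 *v v)))) {0..t}"
    and "((\<lambda>s. f (ys s) (us s) + Cy s *v (xs s + c *\<^sub>R (Phi s *v v))) has_integral (ys t - ys 0)) {0..t}"
proof -
  have bl: "bounded_linear (\<lambda>X::real^'n^'n. c *\<^sub>R (X *v v))"
    by (rule bounded_linear_compose[OF bounded_linear_scaleR_right]) (use bounded_bilinear.bounded_linear_left[OF bb_mv, of v] in simp)
  have p1: "((\<lambda>s. c *\<^sub>R ((M s ** Phi s) *v v)) has_integral c *\<^sub>R ((Phi t - mat 1) *v v)) {0..t}"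
    using has_integral_linear[OF Phii[OF t] bl] by (simp add: o_def)
  have "((\<lambda>s. (M s *v xs s + Bv s) + c *\<^sub>R ((M s ** Phi s) *v v)) has_integral
            ((xs t - xs 0) + c *\<^sub>R ((Phi t - mat 1) *v v))) {0..t}"
    by (rule has_integral_add[OF xi[OF t] p1])
  then show "((\<lambda>s. M s *v (xs s + c *\<^sub>R (Phi s *v v)) + Bv s) has_integral
            ((xs t + c *\<^sub>R (Phi t *v v)) - (xs 0 + c *\<^sub>R (Phi 0 *v v)))) {0..t}"
    using Phi0 by (simp add: algebra_simps matrix_vector_mul_assoc scaleR_matrix_vector_assoc[symmetric] matrix_vector_mult_scaleR)
  have bl2: "bounded_linear (\<lambda>X::real^'n^'k. c *\<^sub>R (X *v v))"
    by (rule bounded_linear_compose[OF bounded_linear_scaleR_right]) (use bounded_bilinear.bounded_linear_left[OF bb_mv, of v] in simp)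
  have p2: "((\<lambda>s. c *\<^sub>R ((Cy s ** Phi s) *v v)) has_integral c *\<^sub>R (R t *v v)) {0..t}"
    using has_integral_linear[OF Ri[OF t] bl2] by (simp add: o_def)
  have "((\<lambda>s. (f (ys s) (us s) + Cy s *v xs s) + c *\<^sub>R ((Cy s ** Phi s) *v v)) has_integral
            ((ys t - ys 0) + c *\<^sub>R (R t *v v))) {0..t}"
    by (rule has_integral_add[OF yi[OF t] p2])
  then show "((\<lambda>s. f (ys s) (us s) + Cy s *v (xs s + c *\<^sub>R (Phi s *v v))) has_integral (ys t - ys 0)) {0..t}"
    using ker[OF Qv t] by (simp add: algebra_simps matrix_vector_mul_assoc scaleR_matrix_vector_assoc[symmetric] matrix_vector_mult_scaleR)
qed

end


lemma has_integral_pair: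
  fixes f :: "real \<Rightarrow> 'a::real_normed_vector" and g :: "real \<Rightarrow> 'b::real_normed_vector"
  assumes "(f has_integral i) S" "(g has_integral j) S"
  shows "((\<lambda>s. (f s, g s)) has_integral (i, j)) S"
proof -
  have bl1: "bounded_linear (\<lambda>x::'a. (x, 0::'b))"
    by (intro bounded_linear_Pair bounded_linear_ident bounded_linear_zero)
  have bl2: "bounded_linear (\<lambda>y::'b. (0::'a, y))"
    by (intro bounded_linear_Pair bounded_linear_ident bounded_linear_zero)
  have "((\<lambda>s. (f s, 0::'b) + (0::'a, g s)) has_integral ((i, 0) + (0, j))) S"
    using has_integral_add[OF has_integral_linear[OF assms(1) bl1] has_integral_linear[OF assms(2) bl2]]
    by (simp add: o_def)
  then show ?thesis by simp
qed

lemma has_integral_fst: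
  "(f has_integral i) S \<Longrightarrow> ((\<lambda>s. fst (f s)) has_integral fst i) S"
  using has_integral_linear[OF _ bounded_linear_fst] by (simp add: o_def)

lemma has_integral_snd:
  "(f has_integral i) S \<Longrightarrow> ((\<lambda>s. snd (f s)) has_integral snd i) S"
  using has_integral_linear[OF _ bounded_linear_snd] by (simp add: o_def)

lemma sys_sol_shift:
  assumes "sys_sol A b C f Ob p u w" "\<tau> \<ge> 0"
  shows "sys_sol A b C f Ob (w \<tau>) (\<lambda>s. u (\<tau> + s)) (\<lambda>s. w (\<tau> + s))"
proof -
  have w0: "w 0 = p" and wc: "continuous_on {0..} w" and wO: "\<forall>t\<ge>0. w t \<in> Ob"
    and wi: "\<forall>t\<ge>0. ((\<lambda>s. sys_field A b C f (w s) (u s)) has_integral (w t - p)) {0..t}"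
    using assms(1) unfolding sys_sol_def by blast+
  have c: "continuous_on {0..} (\<lambda>s. w (\<tau> + s))"
  proof (rule continuous_on_compose2[OF wc])
    show "continuous_on {0..} ((+) \<tau>)" by (intro continuous_intros)
    show "(+) \<tau> ` {0..} \<subseteq> {0..}" using assms(2) by auto
  qed
  have i: "((\<lambda>s. sys_field A b C f (w (\<tau> + s)) (u (\<tau> + s))) has_integral (w (\<tau> + t) - w \<tau>)) {0..t}"
    if t: "t \<ge> 0" for t
  proof -
    have "((\<lambda>s. sys_field A b C f (w s) (u s)) has_integral ((w (\<tau> + t) - p) - (w \<tau> - p))) {\<tau>..\<tau> + t}"
      by (rule has_integral_sub_interval) (use wi assms(2) t in auto)
    then show ?thesis using has_integral_shift[of "\<lambda>s. sys_field A b C f (w s) (u s)" \<tau>] by simp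
  qed
  show ?thesis unfolding sys_sol_def using c i wO assms(2) by auto
qed

lemma window_P:
  fixes D :: "(real^'n) set" and \<Omega> :: "(real^'k) set" and U :: "(real^'m) set"
    and A :: "real^'k \<Rightarrow> real^'m \<Rightarrow> real^'n^'n" and b :: "real^'k \<Rightarrow> real^'m \<Rightarrow> real^'n"
    and C :: "real^'k \<Rightarrow> real^'n^'k" and f :: "real^'k \<Rightarrow> real^'m \<Rightarrow> real^'k"
  assumes D: "open D" and U: "closed U"
    and Ac: "continuous_on (\<Omega> \<times> U) (\<lambda>(y, v). A y v)"
    and bc: "continuous_on (\<Omega> \<times> U) (\<lambda>(y, v). b y v)"
    and Cc: "continuous_on \<Omega> C"
    and wellposed: "\<forall>p\<in>D \<times> \<Omega>. \<forall>v. Linf_loc U v \<longrightarrow>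
          (\<exists>w'. sys_sol A b C f (D \<times> \<Omega>) p v w') \<and>
          (\<forall>w1 w2. sys_sol A b C f (D \<times> \<Omega>) p v w1 \<and> sys_sol A b C f (D \<times> \<Omega>) p v w2
                    \<longrightarrow> (\<forall>t\<ge>0. w1 t = w2 t))"
    and r: "r > 0"
    and obs: "strongly_observable A b C f (D \<times> \<Omega>) U r"
    and inv: "\<forall>\<xi>\<in>D. \<forall>y v. continuous_on {0..r} y \<and> y ` {0..r} \<subseteq> \<Omega> \<and> Linf r U v \<longrightarrow>
          (\<forall>z'. lin_sol A b y v 0 r \<xi> z' \<longrightarrow> (\<forall>t\<in>{0..r}. z' t \<in> D))"
    and us: "Linf_loc U us"
    and ws: "sys_sol A b C f (D \<times> \<Omega>) p us ws"
  shows "obs_P A b C f r (\<lambda>s. snd (ws s)) us = fst (ws r)"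
proof -
  define ys where "ys s = snd (ws s)" for s
  define xs where "xs s = fst (ws s)" for s
  have w0: "ws 0 = p" and wc: "continuous_on {0..} ws" and wO: "\<And>t. t \<ge> 0 \<Longrightarrow> ws t \<in> D \<times> \<Omega>"
    and wi: "\<And>t. t \<ge> 0 \<Longrightarrow> ((\<lambda>s. sys_field A b C f (ws s) (us s)) has_integral (ws t - p)) {0..t}"
    using ws unfolding sys_sol_def by blast+
  have wcr: "continuous_on {0..r} ws" using continuous_on_subset[OF wc] by auto
  have yc: "continuous_on {0..r} ys" unfolding ys_def by (intro continuous_intros wcr)
  have xc: "continuous_on {0..r} xs" unfolding xs_def by (intro continuous_intros wcr)
  have yO: "ys ` {0..r} \<subseteq> \<Omega>" using wO unfolding ys_def by force
  have Lr: "Linf r U us" using Linf_loc_Linf[OF us] r by simp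
  have um: "us \<in> borel_measurable (lebesgue_on {0..r})" "us ` {0..r} \<subseteq> U" "bounded (us ` {0..r})"
    using Lr unfolding Linf_def by (auto simp: sbm_iff)
  note cA = comp_measurable_bounded[OF Ac yc yO um U]
  note cB = comp_measurable_bounded[OF bc yc yO um U]
  obtain K1 where K1: "\<forall>s\<in>{0..r}. norm (A (ys s) (us s)) \<le> K1" using cA(2) by blast
  obtain K2 where K2: "\<forall>s\<in>{0..r}. norm (b (ys s) (us s)) \<le> K2" using cB(2) by blast
  have Cyc: "continuous_on {0..r} (\<lambda>s. C (ys s))"
    by (rule continuous_on_compose2[OF Cc yc yO])
  have xi: "((\<lambda>s. A (ys s) (us s) *v xs s + b (ys s) (us s)) has_integral (xs t - xs 0)) {0..t}"
    if "t \<in> {0..r}" for t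
    using has_integral_fst[OF wi[of t]] that w0 unfolding xs_def ys_def sys_field_def by auto
  have yi: "((\<lambda>s. f (ys s) (us s) + C (ys s) *v xs s) has_integral (ys t - ys 0)) {0..t}"
    if "t \<in> {0..r}" for t
    using has_integral_snd[OF wi[of t]] that w0 unfolding xs_def ys_def sys_field_def by auto
  have MK': "norm (A (ys s) (us s)) \<le> max K1 K2" if "s \<in> {0..r}" for s
    using K1 that by (meson max.coboundedI1)
  have BK': "norm (b (ys s) (us s)) \<le> max K1 K2" if "s \<in> {0..r}" for s
    using K2 that by (meson max.coboundedI2)
  interpret W: window A b C f r ys us xs "max K1 K2"
    by (rule window.intro[OF r cA(1) MK' cB(1) BK' Cyc xc xi yi])
  have "invertible (obs_Q A C r ys us)"
  proof (rule ccontr)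
    assume ni: "\<not> invertible (obs_Q A C r ys us)"
    then obtain v where Qv: "obs_Q A C r ys us *v v = 0" and v0: "v \<noteq> 0"
      unfolding invertible_left_inverse matrix_left_invertible_ker by blast
    define Phi where "Phi = obs_Phi A r ys us"
    have x0D: "xs 0 \<in> D" using wO[of 0] unfolding xs_def by auto
    obtain \<delta> where \<delta>: "\<delta> > 0" "ball (xs 0) \<delta> \<subseteq> D" using D x0D openE by blast
    define \<epsilon> where "\<epsilon> = \<delta> / (2 * norm v)"
    have nv: "norm v > 0" using v0 by simp
    have \<epsilon>0: "\<epsilon> > 0" using \<delta> nv by (simp add: \<epsilon>_def)
    have "norm (\<epsilon> *\<^sub>R v) = \<delta> / 2" using nv \<epsilon>0 \<delta>(1) by (simp add: \<epsilon>_def)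
    then have "xs 0 + \<epsilon> *\<^sub>R v \<in> ball (xs 0) \<delta>" using \<delta>(1) by (simp add: dist_norm)
    then have \<xi>D: "xs 0 + \<epsilon> *\<^sub>R v \<in> D" using \<delta>(2) by blast
    define x' where "x' s = xs s + \<epsilon> *\<^sub>R (Phi s *v v)" for s
    have x'0: "x' 0 = xs 0 + \<epsilon> *\<^sub>R v" using W.Phi0 by (simp add: x'_def Phi_def)
    have x'c: "continuous_on {0..r} x'" unfolding x'_def Phi_def
      by (intro continuous_intros xc bounded_bilinear.continuous_on[OF bb_mv W.Phic])
    have x'i: "((\<lambda>s. A (ys s) (us s) *v x' s + b (ys s) (us s)) has_integral (x' t - x' 0)) {0..t}"
      if "t \<in> {0..r}" for t
      using W.alt_sol(1)[OF Qv that, of \<epsilon>] unfolding x'_def Phi_def by simp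
    have y'i: "((\<lambda>s. f (ys s) (us s) + C (ys s) *v x' s) has_integral (ys t - ys 0)) {0..t}"
      if "t \<in> {0..r}" for t
      using W.alt_sol(2)[OF Qv that, of \<epsilon>] unfolding x'_def Phi_def by simp
    have lin: "lin_sol A b ys us 0 r (xs 0 + \<epsilon> *\<^sub>R v) x'"
      unfolding lin_sol_def using x'0 x'c x'i by auto
    have x'D: "\<forall>t\<in>{0..r}. x' t \<in> D"
      using inv[rule_format, OF \<xi>D, of ys us x'] yc yO Lr lin by blast
    define w2a where "w2a t = (x' t, ys t)" for t
    have w2aO: "w2a t \<in> D \<times> \<Omega>" if "t \<in> {0..r}" for t
      using x'D that yO by (auto simp: w2a_def)
    define us' where "us' s = us (r + s)" for s
    have us'L: "Linf_loc U us'" using Linf_loc_shift[OF us, of r] r unfolding us'_def by simp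
    obtain w3 where w3: "sys_sol A b C f (D \<times> \<Omega>) (w2a r) us' w3"
    proof -
      have wr: "w2a r \<in> D \<times> \<Omega>" using w2aO[of r] r by simp
      have "\<exists>w'. sys_sol A b C f (D \<times> \<Omega>) (w2a r) us' w'"
        using wellposed[rule_format, OF wr us'L] by (rule conjunct1)
      then show ?thesis using that by blast
    qed
    have w30: "w3 0 = w2a r" and w3c: "continuous_on {0..} w3" and w3O: "\<And>t. t \<ge> 0 \<Longrightarrow> w3 t \<in> D \<times> \<Omega>"
      and w3i: "\<And>t. t \<ge> 0 \<Longrightarrow> ((\<lambda>s. sys_field A b C f (w3 s) (us' s)) has_integral (w3 t - w2a r)) {0..t}"
      using w3 unfolding sys_sol_def by blast+
    define q where "q = (xs 0 + \<epsilon> *\<^sub>R v, ys 0)"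
    define w2 where "w2 t = (if t \<le> r then w2a t else w3 (t - r))" for t
    have i1: "((\<lambda>s. sys_field A b C f (w2 s) (us s)) has_integral (w2a t - q)) {0..t}"
      if t: "t \<in> {0..r}" for t
    proof -
      have "((\<lambda>s. (A (ys s) (us s) *v x' s + b (ys s) (us s), f (ys s) (us s) + C (ys s) *v x' s))
              has_integral (x' t - x' 0, ys t - ys 0)) {0..t}"
        by (rule has_integral_pair[OF x'i[OF t] y'i[OF t]])
      moreover have "sys_field A b C f (w2 s) (us s) =
           (A (ys s) (us s) *v x' s + b (ys s) (us s), f (ys s) (us s) + C (ys s) *v x' s)"
        if "s \<in> {0..t}" for s
        using that t by (simp add: w2_def w2a_def sys_field_def)
      ultimately show ?thesis using x'0
        by (subst has_integral_cong[of "{0..t}" _ "\<lambda>s. (A (ys s) (us s) *v x' s + b (ys s) (us s), f (ys s) (us s) + C (ys s) *v x' s)"])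
           (auto simp: w2a_def q_def)
    qed
    have w2sol: "sys_sol A b C f (D \<times> \<Omega>) q us w2"
      unfolding sys_sol_def
    proof (intro conjI allI impI)
      show "w2 0 = q" using r x'0 by (simp add: w2_def w2a_def q_def)
      have e1: "{x \<in> {0..}. x \<le> r} = {0..r}" by auto
      have e2: "{x \<in> {0..}. r \<le> x} = {r..}" using r by auto
      show "continuous_on {0..} w2"
        unfolding w2_def[abs_def]
      proof (rule continuous_on_cases_le[where h="\<lambda>x. x"])
        show "continuous_on {x \<in> {0..}. x \<le> r} w2a" unfolding e1 w2a_def[abs_def]
          by (intro continuous_on_Pair x'c yc)
        show "continuous_on {x \<in> {0..}. r \<le> x} (\<lambda>t. w3 (t - r))" unfolding e2
        proof (rule continuous_on_compose2[OF w3c])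
          show "continuous_on {r..} (\<lambda>t. t - r)" by (intro continuous_intros)
        qed auto
        show "continuous_on {0..} (\<lambda>x. x)" by (intro continuous_intros)
        show "\<And>x. x \<in> {0..} \<Longrightarrow> x = r \<Longrightarrow> w2a x = w3 (x - r)" using w30 by simp
      qed
      fix t :: real assume t: "0 \<le> t"
      show "w2 t \<in> D \<times> \<Omega>" using w2aO w3O t by (simp add: w2_def)
      show "((\<lambda>s. sys_field A b C f (w2 s) (us s)) has_integral (w2 t - q)) {0..t}"
      proof (cases "t \<le> r")
        case True then show ?thesis using i1[of t] t by (simp add: w2_def)
      next
        case False
        have I1: "((\<lambda>s. sys_field A b C f (w2 s) (us s)) has_integral (w2a r - q)) {0..r}"
          using i1[of r] r by simp
        have "((\<lambda>s. sys_field A b C f (w3 s) (us' s)) has_integral (w3 (t - r) - w2a r)) {0..t - r}"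
          using w3i[of "t - r"] False by simp
        then have "((\<lambda>s. sys_field A b C f (w3 ((r + s) - r)) (us (r + s))) has_integral (w3 (t - r) - w2a r)) {0..t - r}"
          by (simp add: us'_def)
        then have "((\<lambda>s. sys_field A b C f (w3 (s - r)) (us s)) has_integral (w3 (t - r) - w2a r)) {r + 0..r + (t - r)}"
          using has_integral_shift[of "\<lambda>s. sys_field A b C f (w3 (s - r)) (us s)" r] by simp
        then have "((\<lambda>s. sys_field A b C f (w3 (s - r)) (us s)) has_integral (w3 (t - r) - w2a r)) {r..t}"
          by simp
        moreover have "sys_field A b C f (w2 s) (us s) = sys_field A b C f (w3 (s - r)) (us s)"
          if "s \<in> {r..t}" for s
          using that w30 by (cases "s \<le> r") (auto simp: w2_def)
        ultimately have I2: "((\<lambda>s. sys_field A b C f (w2 s) (us s)) has_integral (w3 (t - r) - w2a r)) {r..t}"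
          by (subst has_integral_cong) auto
        have "((\<lambda>s. sys_field A b C f (w2 s) (us s)) has_integral ((w2a r - q) + (w3 (t - r) - w2a r))) {0..t}"
          by (rule has_integral_combine[OF _ _ I1 I2]) (use r False in auto)
        then show ?thesis using False by (simp add: w2_def)
      qed
    qed
    have sd: "strongly_distinguishes A b C f (D \<times> \<Omega>) U r us p"
      using obs Lr wO[of 0] w0 unfolding strongly_observable_def by auto
    have qO: "q \<in> D \<times> \<Omega>" using \<xi>D wO[of 0] by (auto simp: q_def ys_def)
    have pq: "q \<noteq> p"
    proof
      assume "q = p"
      then have "fst q = fst (ws 0)" using w0 by simp
      then have "xs 0 + \<epsilon> *\<^sub>R v = xs 0" by (simp add: q_def xs_def)
      then show False using \<epsilon>0 v0 by simp
    qed
    obtain t where t: "t \<in> {0..r}" "snd (ws t) \<noteq> snd (w2 t)"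
      using sd qO pq us ws w2sol unfolding strongly_distinguishes_def by blast
    then show False by (simp add: w2_def w2a_def ys_def)
  qed
  then show ?thesis using W.P_eq unfolding ys_def xs_def by simp
qed



theorem corollary2p11:
  fixes D :: "(real^'n) set" and \<Omega> :: "(real^'k) set" and U :: "(real^'m) set"
    and A :: "real^'k \<Rightarrow> real^'m \<Rightarrow> real^'n^'n" and b :: "real^'k \<Rightarrow> real^'m \<Rightarrow> real^'n"
    and C :: "real^'k \<Rightarrow> real^'n^'k" and f :: "real^'k \<Rightarrow> real^'m \<Rightarrow> real^'k"
    and r :: real and x0 z0 :: "real^'n" and y0 :: "real^'k"
    and u :: "real \<Rightarrow> real^'m" and w :: "real \<Rightarrow> (real^'n) \<times> (real^'k)"
    and z :: "real \<Rightarrow> real^'n"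
  assumes "open D" and "open \<Omega>" and "U \<noteq> {}" and "closed U"
    and "loc_lipschitz (\<Omega> \<times> U) (\<lambda>(y, v). A y v)"
    and "loc_lipschitz (\<Omega> \<times> U) (\<lambda>(y, v). b y v)"
    and "\<forall>i j. loc_lipschitz \<Omega> (\<lambda>y. C y $ i $ j)"
    and "loc_lipschitz (\<Omega> \<times> U) (\<lambda>(y, v). f y v)"
    and wellposed: "\<forall>p\<in>D \<times> \<Omega>. \<forall>v. Linf_loc U v \<longrightarrow>
          (\<exists>w'. sys_sol A b C f (D \<times> \<Omega>) p v w') \<and>
          (\<forall>w1 w2. sys_sol A b C f (D \<times> \<Omega>) p v w1 \<and> sys_sol A b C f (D \<times> \<Omega>) p v w2
                    \<longrightarrow> (\<forall>t\<ge>0. w1 t = w2 t))"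
    and "r > 0"
    and obs: "strongly_observable A b C f (D \<times> \<Omega>) U r"
    and inv: "\<forall>\<xi>\<in>D. \<forall>y v. continuous_on {0..r} y \<and> y ` {0..r} \<subseteq> \<Omega> \<and> Linf r U v \<longrightarrow>
          (\<forall>z'. lin_sol A b y v 0 r \<xi> z' \<longrightarrow> (\<forall>t\<in>{0..r}. z' t \<in> D))"
    and "x0 \<in> D" and "y0 \<in> \<Omega>" and "z0 \<in> D"
    and "Linf_loc U u"
    and "sys_sol A b C f (D \<times> \<Omega>) (x0, y0) u w"
    and "observer_sol A b C f r (\<lambda>t. snd (w t)) u z0 z"
    and "\<forall>t\<ge>0. z t \<in> D"
  shows "\<forall>t\<ge>r. z t = fst (w t)"
  proof -
  note wellposed = wellposed
  have Ac: "continuous_on (\<Omega> \<times> U) (\<lambda>(y, v). A y v)" by (rule loc_lipschitz_cont) fact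
  have bc: "continuous_on (\<Omega> \<times> U) (\<lambda>(y, v). b y v)" by (rule loc_lipschitz_cont) fact
  have Cc: "continuous_on \<Omega> C" by (rule C_cont) fact
  have w0: "w 0 = (x0, y0)" and wc: "continuous_on {0..} w" and wO: "\<And>t. t \<ge> 0 \<Longrightarrow> w t \<in> D \<times> \<Omega>"
    and wi: "\<And>t. t \<ge> 0 \<Longrightarrow> ((\<lambda>s. sys_field A b C f (w s) (u s)) has_integral (w t - (x0, y0))) {0..t}"
    using \<open>sys_sol A b C f (D \<times> \<Omega>) (x0, y0) u w\<close> unfolding sys_sol_def by blast+
  have zobs: "\<And>i. (\<forall>t. real i * r \<le> t \<and> t < real (Suc i) * r \<longrightarrow>
           ((\<lambda>s. A (snd (w s)) (u s) *v z s + b (snd (w s)) (u s)) has_integral (z t - z (real i * r)))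
             {real i * r..t})"
    and zP: "\<And>i. z (real (Suc i) * r) =
          obs_P A b C f r (\<lambda>\<sigma>. snd (w (real i * r + \<sigma>))) (\<lambda>\<sigma>. u (real i * r + \<sigma>))"
    using \<open>observer_sol A b C f r (\<lambda>t. snd (w t)) u z0 z\<close> unfolding observer_sol_def by auto
  have Z1: "z (real (Suc i) * r) = fst (w (real (Suc i) * r))" for i
  proof -
    have \<tau>: "real i * r \<ge> 0" using \<open>r > 0\<close> by simp
    have "obs_P A b C f r (\<lambda>s. snd (w (real i * r + s))) (\<lambda>s. u (real i * r + s)) = fst (w (real i * r + r))"
      by (rule window_P[OF \<open>open D\<close> \<open>closed U\<close> Ac bc Cc wellposed \<open>r > 0\<close> obs inv
            Linf_loc_shift[OF \<open>Linf_loc U u\<close> \<tau>] sys_sol_shift[OF \<open>sys_sol A b C f (D \<times> \<Omega>) (x0, y0) u w\<close> \<tau>]])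
    then show ?thesis using zP[of i] by (simp add: distrib_right add.commute)
  qed
  show ?thesis
  proof (intro allI impI)
    fix t assume tr: "t \<ge> r"
    define i where "i = nat \<lfloor>t / r\<rfloor>"
    have r0: "r > 0" by fact
    have "t / r \<ge> 1" using tr r0 by simp
    then have i1: "i \<ge> 1" unfolding i_def by linarith
    have "real i = of_int \<lfloor>t / r\<rfloor>" unfolding i_def using \<open>t / r \<ge> 1\<close> by simp
    then have "real i \<le> t / r" "t / r < real i + 1" by linarith+
    then have it: "real i * r \<le> t" "t < real (Suc i) * r" using r0 by (simp_all add: field_simps)
    define a where "a = real i * r"
    obtain j where j: "i = Suc j" using i1 by (cases i) auto
    have za: "z a = fst (w a)" unfolding a_def j by (rule Z1)
    have a0: "a \<ge> 0" unfolding a_def using r0 by simp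
    have at: "a \<le> t" using it unfolding a_def by simp
    define e where "e s = z s - fst (w s)" for s
    have zi: "((\<lambda>s. A (snd (w s)) (u s) *v z s + b (snd (w s)) (u s)) has_integral (z t' - z a)) {a..t'}"
      if "t' \<in> {a..t}" for t'
      using zobs[of i] that it unfolding a_def by auto
    have xi: "((\<lambda>s. A (snd (w s)) (u s) *v fst (w s) + b (snd (w s)) (u s)) has_integral (fst (w t') - fst (w a))) {a..t'}"
      if t': "t' \<in> {a..t}" for t'
    proof -
      have "((\<lambda>s. sys_field A b C f (w s) (u s)) has_integral ((w t' - (x0, y0)) - (w a - (x0, y0)))) {a..t'}"
        by (rule has_integral_sub_interval) (use wi a0 t' in auto)
      from has_integral_fst[OF this] show ?thesis by (simp add: sys_field_def)
    qed
    have ei: "((\<lambda>s. A (snd (w s)) (u s) *v e s) has_integral e t') {a..t'}" if t': "t' \<in> {a..t}" for t'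
    proof -
      have "((\<lambda>s. (A (snd (w s)) (u s) *v z s + b (snd (w s)) (u s)) - (A (snd (w s)) (u s) *v fst (w s) + b (snd (w s)) (u s)))
              has_integral ((z t' - z a) - (fst (w t') - fst (w a)))) {a..t'}"
        by (rule has_integral_diff[OF zi[OF t'] xi[OF t']])
      then show ?thesis using za by (simp add: e_def matrix_vector_mult_diff_distrib)
    qed
    have zc: "continuous_on {a..t} z"
    proof -
      have gi: "(\<lambda>s. A (snd (w s)) (u s) *v z s + b (snd (w s)) (u s)) integrable_on {a..t}"
        using zi[of t] at by auto
      have "continuous_on {a..t} (\<lambda>s. z a + integral {a..s} (\<lambda>s. A (snd (w s)) (u s) *v z s + b (snd (w s)) (u s)))"
        by (intro continuous_intros indefinite_integral_continuous_1 gi)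
      then show ?thesis
      proof (rule continuous_on_eq)
        fix x assume x: "x \<in> {a..t}"
        show "z a + integral {a..x} (\<lambda>s. A (snd (w s)) (u s) *v z s + b (snd (w s)) (u s)) = z x"
          using integral_unique[OF zi[OF x]] by simp
      qed
    qed
    have wct: "continuous_on {a..t} w" using continuous_on_subset[OF wc] a0 by auto
    have ec: "continuous_on {a..t} e" unfolding e_def by (intro continuous_intros zc wct)
    have yc: "continuous_on {a..t} (\<lambda>s. snd (w s))" by (intro continuous_intros wct)
    have yO: "(\<lambda>s. snd (w s)) ` {a..t} \<subseteq> \<Omega>"
    proof
      fix y assume "y \<in> (\<lambda>s. snd (w s)) ` {a..t}"
      then obtain s where s: "s \<in> {a..t}" "y = snd (w s)" by blast
      have "w s \<in> D \<times> \<Omega>" using wO[of s] s a0 by auto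
      then show "y \<in> \<Omega>" using s by auto
    qed
    have um: "u \<in> borel_measurable (lebesgue_on {a..t})"
      using bm_mono[OF Linf_loc_bm[OF \<open>Linf_loc U u\<close>]] a0 by auto
    have uU: "u ` {a..t} \<subseteq> U" using \<open>Linf_loc U u\<close> a0 unfolding Linf_loc_def by auto
    have ub: "bounded (u ` {a..t})"
    proof -
      have "bounded (u ` {0..t})" using \<open>Linf_loc U u\<close> unfolding Linf_loc_def by blast
      then show ?thesis by (rule bounded_subset) (use a0 in auto)
    qed
    obtain K where K: "\<forall>s\<in>{a..t}. norm (A (snd (w s)) (u s)) \<le> K"
      using comp_measurable_bounded(2)[OF Ac yc yO um uU ub \<open>closed U\<close>] by blast
    obtain Kp where Kp: "Kp > 0" "\<And>(x::real^'n^'n) (y::real^'n). norm (x *v y) \<le> norm x * norm y * Kp"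
      using bounded_bilinear.pos_bounded[OF bb_mv] by fastforce
    have K0: "K \<ge> 0" using K at by (meson atLeastAtMost_iff norm_ge_zero order.trans order_refl)
    have "e t = 0"
    proof (rule gronwall_zero[OF at ec ei _ _ ])
      fix s assume s: "s \<in> {a..t}"
      have "norm (A (snd (w s)) (u s) *v e s) \<le> norm (A (snd (w s)) (u s)) * norm (e s) * Kp" by (rule Kp(2))
      also have "\<dots> \<le> K * norm (e s) * Kp" using K s Kp by (intro mult_right_mono) auto
      finally show "norm (A (snd (w s)) (u s) *v e s) \<le> K * Kp * norm (e s)" by (simp add: mult_ac)
    qed (use K0 Kp at in auto)
    then show "z t = fst (w t)" by (simp add: e_def)
  qed
qed

end
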